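(* Let $q$ be a prime, $m\in\mathbb Z$, $n\in\mathbb N$ with $\gcd(m,n)=1$, and let $\Phi_q:\mathbb Z\to\mathbb F_q$ be the quotient map; when $q\nmid n$, let $[m/n]_q\in\mathbb F_q$ be the element with $\Phi_q(n)[m/n]_q=\Phi_q(m)$. All convergences below are in $\mathbb A$. (b) The sets $U_{\mathbb R}$, $U_q$ and $\mu_{\mathbb Z(q)}(\mathbb F_q)\cup U_q$ are open in $\mathbb A^{\min}$. (c) The subspaces $\mu_{\mathbb Q_0}(\mathbb Q)$ and $\bigcup_{p}\mu_{\mathbb Z(p)}(\mathbb F_p)$ are discrete. (d) Let $(p_i,\omega_i)_{i\in\mathbb N}$ be a sequence in $\{\text{primes}\}\times(0,\infty)$ and $s_i\in\mathbb Q_{p_i}$. Then $\mu_{\mathbb Q_{p_i}^{\omega_i}}(s_i)\to\mu_{\mathbb Z(q)}(\Phi_q(n))$ if and only if $\omega_i\to\infty$ and there is $i_0$ such that for all $i\ge i_0$, $p_i=q$ and $s_i\in n+q\mathbb Z_q$, where $\mathbb Z_q=\{s\in\mathbb Q_q:|s|_q\le1\}$. (e) Let $(p_i,k_i)_{i\in\mathbb N}$ be a sequence in $\{\text{primes}\}\times\mathbb Z$. Then $\mu_{\mathbb Z(p_i)}(\Phi_{p_i}(k_i))\to\mu_{\mathbb Q_0}(m/n)$ if and only if $p_i\to\infty$ and there is $i_0$ with $\Phi_{p_i}(k_i)=[m/n]_{p_i}$ for all $i\ge i_0$. (f) Let $\upsilon_i\in(0,1]$ and $t_i\in\mathbb R$.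 Then $\mu_{\mathbb R_{\upsilon_i}}(t_i)\to\mu_{\mathbb Q_0}(m/n)$ if and only if $\upsilon_i\to0$ and $|t_i-m/n|^{\upsilon_i}\to0$ ($|\cdot|$ Euclidean). (g) Let $(p_i,\omega_i)$ be a sequence in $\{\text{primes}\}\times(0,\infty)$ and $s_i\in\mathbb Q_{p_i}$. Then $\mu_{\mathbb Q_{p_i}^{\omega_i}}(s_i)\to\mu_{\mathbb Q_0}(m/n)$ if and only if $|k|_{p_i}^{\omega_i}\to1$ for every $k\in\mathbb N$ and $|s_i-m/n|_{p_i}^{\omega_i}\to0$.
   Context: $\mathbb A$ is the set of non-zero multiplicative semi-norms on $\mathbb Z[t]$ with the topology of pointwise convergence on $\mathbb Z[t]$. For a complete valuation field $K$ and $s\in K$, $\mu_K(s)\in\mathbb A$ is $p\mapsto|p(s)|_K$. Minimal fields: $\mathbb Q_0$ ($\mathbb Q$ with trivial absolute value), $\mathbb Z(p)$ ($\mathbb F_p$ with trivial absolute value), $\mathbb R_\upsilon$ ($\mathbb R$ with $|x|^\upsilon$, $|\cdot|$ Euclidean, $\upsilon\in(0,1]$), $\mathbb Q_p^\omega$ ($\mathbb Q_p$ with $|x|_p^\omega$, $\omega>0$). $\mathbb A^{\min}$ is the union of $\mu_K(K)$ over all these minimal fields $K$, with the subspace topology from $\mathbb A$; $U_{\mathbb R}:=\bigcup_{\upsilon\in(0,1]}\mu_{\mathbb R_\upsilon}(\mathbb R)$ and $U_q:=\bigcup_{\omega\in(0,\infty)}\mu_{\mathbb Q_q^\omega}(\mathbb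 Q_q)$. *)

theory Defs
  imports "HOL-Analysis.Analysis" "HOL-Computational_Algebra.Polynomial"
    "HOL-Computational_Algebra.Primes" "HOL-Number_Theory.Cong"
begin

text \<open>Elements of the space A are functions  int poly => real  (semi-norms on Z[t]);
  the topology of pointwise convergence is the product topology on this function type
  (instance from HOL-Analysis Function_Topology).\<close>

type_synonym seminorm = "int poly \<Rightarrow> real"

definition muQ0 :: "rat \<Rightarrow> seminorm" where
  "muQ0 r = (\<lambda>f. if poly (map_poly of_int f) r = 0 then 0 else 1)"

section \<open>Z(p): F_p with trivial absolute value; elements of F_p are residues in {0..<p}\<close>

definition Phi :: "nat \<Rightarrow> int \<Rightarrow> int" where
  "Phi p k = k mod int p"

definition frac_mod :: "nat \<Rightarrow> int \<Rightarrow> int \<Rightarrow> int" where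
  "frac_mod p m n = (THE x. 0 \<le> x \<and> x < int p \<and> [n * x = m] (mod int p))"

definition muF :: "nat \<Rightarrow> int \<Rightarrow> seminorm" where
  "muF p a = (\<lambda>f. if [poly f a = 0] (mod int p) then 0 else 1)"

definition muR :: "real \<Rightarrow> real \<Rightarrow> seminorm" where
  "muR v t = (\<lambda>f. \<bar>poly (map_poly of_int f) t\<bar> powr v)"

section \<open>Q_p^w: p-adic numbers, represented by p-adic Cauchy sequences of rationals\<close>

definition padic_val :: "nat \<Rightarrow> rat \<Rightarrow> int" where
  "padic_val p r = (case quotient_of r of (a, b) \<Rightarrow>
      int (multiplicity (int p) a) - int (multiplicity (int p) b))"

definition padic_abs :: "nat \<Rightarrow> rat \<Rightarrow> real" where
  "padic_abs p r = (if r = 0 then 0 else real p powr (- real_of_int (padic_val p r)))"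

definition padic_cauchy :: "nat \<Rightarrow> (nat \<Rightarrow> rat) \<Rightarrow> bool" where
  "padic_cauchy p x \<longleftrightarrow>
     (\<forall>e>0. \<exists>N. \<forall>j\<ge>N. \<forall>k\<ge>N. padic_abs p (x j - x k) < e)"

definition padic_norm :: "nat \<Rightarrow> (nat \<Rightarrow> rat) \<Rightarrow> real" where
  "padic_norm p x = lim (\<lambda>k. padic_abs p (x k))"

definition muQp :: "nat \<Rightarrow> real \<Rightarrow> (nat \<Rightarrow> rat) \<Rightarrow> seminorm" where
  "muQp p w x = (\<lambda>f. padic_norm p (\<lambda>k. poly (map_poly of_int f) (x k)) powr w)"

definition UQ0 :: "seminorm set" where
  "UQ0 = range muQ0"

definition UF :: "nat \<Rightarrow> seminorm set" where
  "UF p = muF p ` {0..<int p}"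

definition UR :: "seminorm set" where
  "UR = {muR v t | v t. v \<in> {0<..1}}"

definition Uq :: "nat \<Rightarrow> seminorm set" where
  "Uq q = {muQp q w x | w x. w > 0 \<and> padic_cauchy q x}"

definition Amin :: "seminorm set" where
  "Amin = UQ0 \<union> (\<Union>p\<in>{p. prime p}. UF p) \<union> UR \<union> (\<Union>p\<in>{p. prime p}. Uq p)"

definition discrete_subspace :: "seminorm set \<Rightarrow> bool" where
  "discrete_subspace S \<longleftrightarrow> (\<forall>x\<in>S. openin (top_of_set S) {x})"

end

theory Submission
  imports Defs
begin


lemma mult_distrib': "prime (p::nat) \<Longrightarrow> x \<noteq> 0 \<Longrightarrow> y \<noteq> 0 \<Longrightarrow>
   multiplicity (int p) (x * y) = multiplicity (int p) x + multiplicity (int p) y"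
  by (rule prime_elem_multiplicity_mult_distrib) auto

lemma padic_val_repr:
  assumes p: "prime p" and a: "a \<noteq> 0" and b: "b \<noteq> 0"
  shows "padic_val p (of_int a / of_int b) =
     int (multiplicity (int p) a) - int (multiplicity (int p) b)"
proof -
  obtain a' b' where q: "quotient_of (of_int a / of_int b) = (a', b')" by fastforce
  have r: "(of_int a / of_int b :: rat) = of_int a' / of_int b'" using quotient_of_div[OF q] .
  have b': "b' > 0" using quotient_of_denom_pos[OF q] .
  have "a' * b = a * b'"
    using r b b' by (simp add: frac_eq_eq) (metis of_int_eq_iff of_int_mult)
  moreover have a': "a' \<noteq> 0" using r a b b' by auto
  ultimately have "multiplicity (int p) a' + multiplicity (int p) b =
                   multiplicity (int p) a + multiplicity (int p) b'"
    using mult_distrib'[OF p, of a' b] mult_distrib'[OF p, of a b'] a a' b b' by simp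
  thus ?thesis unfolding padic_val_def q by simp
qed

lemma rat_repr: "\<exists>a b. a \<noteq> 0 \<and> b \<noteq> 0 \<and> r = of_int a / of_int b" if "r \<noteq> 0" for r :: rat
proof -
  obtain a b where q: "quotient_of r = (a, b)" by fastforce
  show ?thesis using quotient_of_div[OF q] quotient_of_denom_pos[OF q] that
    by (intro exI[of _ a] exI[of _ b]) auto
qed

lemma padic_val_mult:
  assumes p: "prime p" and "x \<noteq> 0" "y \<noteq> 0"
  shows "padic_val p (x * y) = padic_val p x + padic_val p y"
proof -
  obtain a b where ab: "a \<noteq> 0" "b \<noteq> 0" "x = of_int a / of_int b" using rat_repr assms by blast
  obtain c d where cd: "c \<noteq> 0" "d \<noteq> 0" "y = of_int c / of_int d" using rat_repr assms by blast
  have "x * y = of_int (a*c) / of_int (b*d)" using ab cd by simp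
  hence "padic_val p (x * y) = int (multiplicity (int p) (a*c)) - int (multiplicity (int p) (b*d))"
    using padic_val_repr[OF p, of "a*c" "b*d"] ab cd by simp
  thus ?thesis using padic_val_repr[OF p] ab cd mult_distrib'[OF p, of a c] mult_distrib'[OF p, of b d] by simp
qed

lemma padic_val_int: "prime p \<Longrightarrow> a \<noteq> 0 \<Longrightarrow> padic_val p (of_int a) = int (multiplicity (int p) a)"
  using padic_val_repr[of p a 1] by simp

lemma mult_ge_min:
  assumes p: "prime p" and "a \<noteq> 0" "c \<noteq> 0" "a + c \<noteq> 0"
  shows "multiplicity (int p) (a + c) \<ge> min (multiplicity (int p) a) (multiplicity (int p) c)"
proof -
  let ?k = "min (multiplicity (int p) a) (multiplicity (int p) c)"
  have "int p ^ ?k dvd a" by (meson min.cobounded1 multiplicity_dvd dvd_trans le_imp_power_dvd)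
  moreover have "int p ^ ?k dvd c" by (meson min.cobounded2 multiplicity_dvd dvd_trans le_imp_power_dvd)
  ultimately have "int p ^ ?k dvd a + c" by simp
  thus ?thesis using assms by (intro multiplicity_geI) (auto simp: prime_gt_1_nat)
qed

lemma padic_val_add:
  assumes p: "prime p" and "x \<noteq> 0" "y \<noteq> 0" "x + y \<noteq> 0"
  shows "padic_val p (x + y) \<ge> min (padic_val p x) (padic_val p y)"
proof -
  obtain a b where ab: "a \<noteq> 0" "b \<noteq> 0" "x = of_int a / of_int b" using rat_repr assms by blast
  obtain c d where cd: "c \<noteq> 0" "d \<noteq> 0" "y = of_int c / of_int d" using rat_repr assms by blast
  have x: "x = of_int (a*d) / of_int (b*d)" and y: "y = of_int (c*b) / of_int (b*d)"
    using ab cd by auto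
  have s: "x + y = of_int (a*d + c*b) / of_int (b*d)" using x y by (simp add: add_divide_distrib)
  have nz: "a*d + c*b \<noteq> 0"
  proof
    assume "a*d + c*b = 0"
    hence "(of_int (a*d + c*b) :: rat) = 0" by simp
    thus False using s assms by simp
  qed
  have "padic_val p (x + y) = int (multiplicity (int p) (a*d + c*b)) - int (multiplicity (int p) (b*d))"
    unfolding s by (rule padic_val_repr[OF p nz]) (use ab cd in simp)
  moreover have "padic_val p x = int (multiplicity (int p) (a*d)) - int (multiplicity (int p) (b*d))"
    unfolding x by (rule padic_val_repr[OF p]) (use ab cd in simp_all)
  moreover have "padic_val p y = int (multiplicity (int p) (c*b)) - int (multiplicity (int p) (b*d))"
    unfolding y by (rule padic_val_repr[OF p]) (use ab cd in simp_all)
  moreover have "multiplicity (int p) (a*d + c*b) \<ge> min (multiplicity (int p) (a*d)) (multiplicity (int p) (c*b))"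
    using mult_ge_min[OF p] ab cd nz by simp
  ultimately show ?thesis by linarith
qed



lemma pabs_nz: "x \<noteq> 0 \<Longrightarrow> padic_abs p x = real p powr (- real_of_int (padic_val p x))"
  by (simp add: padic_abs_def)

lemma pabs_nonneg: "padic_abs p x \<ge> 0"
  by (simp add: padic_abs_def)

lemma pabs_eq0: "prime p \<Longrightarrow> padic_abs p x = 0 \<longleftrightarrow> x = 0"
  using prime_gt_0_nat by (auto simp add: padic_abs_def)

lemma pabs_0 [simp]: "padic_abs p 0 = 0" by (simp add: padic_abs_def)

lemma pabs_mult:
  assumes p: "prime p" shows "padic_abs p (x * y) = padic_abs p x * padic_abs p y"
proof (cases "x = 0 \<or> y = 0")
  case False
  thus ?thesis using padic_val_mult[OF p, of x y] prime_gt_0_nat[OF p]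
    by (simp add: padic_abs_def powr_add[symmetric])
qed auto

lemma pabs_ultra:
  assumes p: "prime p" shows "padic_abs p (x + y) \<le> max (padic_abs p x) (padic_abs p y)"
proof (cases "x = 0 \<or> y = 0 \<or> x + y = 0")
  case True thus ?thesis using pabs_nonneg[of p x] pabs_nonneg[of p y] by auto
next
  case False
  hence v: "padic_val p (x + y) \<ge> min (padic_val p x) (padic_val p y)"
    using padic_val_add[OF p] by auto
  have P: "real p > 1" using prime_gt_1_nat[OF p] by simp
  show ?thesis
  proof (cases "padic_val p x \<le> padic_val p y")
    case True
    hence "padic_abs p (x + y) \<le> padic_abs p x" using False v P
      by (auto simp add: padic_abs_def intro!: powr_mono)
    thus ?thesis by linarith
  next
    case f2: False
    hence "padic_abs p (x + y) \<le> padic_abs p y" using False v P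
      by (auto simp add: padic_abs_def intro!: powr_mono)
    thus ?thesis by linarith
  qed
qed

lemma pabs_int_eq:
  assumes p: "prime p" and k: "k \<noteq> 0"
  shows "padic_abs p (of_int k) = real p powr (- real (multiplicity (int p) k))"
  using padic_val_int[OF p k] k by (simp add: padic_abs_def)

lemma pabs_int_le1: assumes p: "prime p" shows "padic_abs p (of_int k) \<le> 1"
proof (cases "k = 0")
  case False
  have "real p powr (- real (multiplicity (int p) k)) \<le> real p powr 0"
    using prime_gt_1_nat[OF p] by (intro powr_mono) auto
  thus ?thesis using pabs_int_eq[OF p False] prime_gt_1_nat[OF p] by simp
qed simp

lemma pabs_int_eq1: assumes p: "prime p" shows "padic_abs p (of_int k) = 1 \<longleftrightarrow> \<not> int p dvd k"
proof (cases "k = 0")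
  case False
  have P: "real p > 1" using prime_gt_1_nat[OF p] by simp
  show ?thesis
  proof
    assume "padic_abs p (of_int k) = 1"
    hence "real p powr (- real (multiplicity (int p) k)) = 1" using pabs_int_eq[OF p False] by simp
    hence "multiplicity (int p) k = 0" using P by (simp add: powr_eq_one_iff_gen)
    thus "\<not> int p dvd k" using False p
      by (metis multiplicity_eq_zero_iff not_prime_unit prime_nat_int_transfer)
  next
    assume "\<not> int p dvd k"
    hence "multiplicity (int p) k = 0" by (simp add: not_dvd_imp_multiplicity_0)
    thus "padic_abs p (of_int k) = 1" using pabs_int_eq[OF p False] P by simp
  qed
qed simp

lemma pabs_1 [simp]: "prime p \<Longrightarrow> padic_abs p 1 = 1"
  using pabs_int_eq1[of p 1] by (simp add: prime_nat_iff)

lemma pabs_minus: assumes p: "prime p" shows "padic_abs p (- x) = padic_abs p x"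
proof -
  have "padic_abs p (-1) = 1" using pabs_int_eq1[OF p, of "-1"] p
    by (simp add: prime_nat_iff)
  thus ?thesis using pabs_mult[OF p, of "-1" x] by simp
qed

lemma pabs_lt1: assumes p: "prime p" and "padic_abs p x < 1" shows "padic_abs p x \<le> 1 / real p"
proof (cases "x = 0")
  case False
  have P: "real p > 1" using prime_gt_1_nat[OF p] by simp
  have "real p powr (- real_of_int (padic_val p x)) < real p powr 0"
    using assms(2) pabs_nz[OF False] P by simp
  hence "- real_of_int (padic_val p x) < 0" using powr_less_cancel_iff[OF P] by blast
  hence "padic_val p x \<ge> 1" by simp
  hence "real p powr (- real_of_int (padic_val p x)) \<le> real p powr (-1)"
    using P by (intro powr_mono) auto
  thus ?thesis using pabs_nz[OF False] P by (simp add: powr_minus divide_inverse)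
qed (simp)

lemma pabs_p: assumes p: "prime p" shows "padic_abs p (of_nat p) = 1 / real p"
proof -
  have "multiplicity (int p) (int p) = 1"
    using p by (simp add: multiplicity_self prime_nat_int_transfer prime_imp_prime_elem prime_elem_not_unit)
  thus ?thesis using pabs_int_eq[OF p, of "int p"] p prime_gt_0_nat[OF p]
    by (simp add: powr_minus divide_inverse)
qed

lemma pabs_sub_le: "prime p \<Longrightarrow> padic_abs p (x - y) \<le> max (padic_abs p x) (padic_abs p y)"
  using pabs_ultra[of p x "-y"] pabs_minus[of p y] by simp

lemma pabs_tri: assumes p: "prime p" shows "padic_abs p x \<le> max (padic_abs p y) (padic_abs p (x - y))"
  using pabs_ultra[OF p, of y "x - y"] by simp

lemma pabs_commute: "prime p \<Longrightarrow> padic_abs p (x - y) = padic_abs p (y - x)"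
  using pabs_minus[of p "x - y"] by simp

lemma pabs_diff_abs: assumes p: "prime p"
  shows "\<bar>padic_abs p x - padic_abs p y\<bar> \<le> padic_abs p (x - y)"
proof -
  have "padic_abs p x \<le> max (padic_abs p y) (padic_abs p (x - y))"
       "padic_abs p y \<le> max (padic_abs p x) (padic_abs p (x - y))"
    using pabs_tri[OF p, of x y] pabs_tri[OF p, of y x] pabs_commute[OF p, of x y] by auto
  thus ?thesis using pabs_nonneg[of p x] pabs_nonneg[of p y] pabs_nonneg[of p "x-y"]
    by (auto simp: abs_if max_def split: if_splits)
qed



lemma poly_of_int_pCons [simp]:
  "poly (map_poly of_int (pCons a g)) (x :: 'a :: comm_ring_1) = of_int a + x * poly (map_poly of_int g) x"
  by (simp add: map_poly_pCons)

lemma poly_scale: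
  fixes f :: "int poly" and n :: int
  shows "degree f \<le> D \<Longrightarrow> \<exists>G :: int poly. \<forall>x :: 'a :: comm_ring_1.
     of_int n ^ D * poly (map_poly of_int f) x = poly (map_poly of_int G) (of_int n * x)"
proof (induction f arbitrary: D rule: pCons_induct)
  case 0 thus ?case by (intro exI[of _ 0]) simp
next
  case (pCons a g)
  show ?case
  proof (cases D)
    case 0
    hence "g = 0" using pCons.prems pCons.hyps by (auto split: if_splits)
    thus ?thesis using 0 by (intro exI[of _ "[:a:]"]) simp
  next
    case (Suc D')
    have "degree g \<le> D'" using pCons.prems Suc by (auto split: if_splits)
    then obtain G' :: "int poly" where G': "\<forall>x :: 'a. of_int n ^ D' * poly (map_poly of_int g) x =
       poly (map_poly of_int G') (of_int n * x)" using pCons.IH by blast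
    show ?thesis
    proof (intro exI[of _ "pCons (a * n ^ D) G'"] allI)
      fix x :: 'a
      have "of_int n ^ D * poly (map_poly of_int (pCons a g)) x =
          of_int a * of_int n ^ D + (of_int n * x) * (of_int n ^ D' * poly (map_poly of_int g) x)"
        using Suc by (simp add: algebra_simps)
      also have "\<dots> = poly (map_poly of_int (pCons (a * n ^ D) G')) (of_int n * x)"
        using G' by simp
      finally show "of_int n ^ D * poly (map_poly of_int (pCons a g)) x =
          poly (map_poly of_int (pCons (a * n ^ D) G')) (of_int n * x)" .
    qed
  qed
qed

lemma padic_poly_le1:
  assumes p: "prime p" and x: "padic_abs p x \<le> 1"
  shows "padic_abs p (poly (map_poly of_int f) x) \<le> 1"
proof (induction f rule: pCons_induct)
  case 0 thus ?case by simp
next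
  case (pCons a g)
  have "padic_abs p (of_int a + x * poly (map_poly of_int g) x) \<le>
        max (padic_abs p (of_int a)) (padic_abs p (x * poly (map_poly of_int g) x))"
    by (rule pabs_ultra[OF p])
  moreover have "padic_abs p (x * poly (map_poly of_int g) x) \<le> 1"
    using pCons.IH x pabs_nonneg[of p] by (simp add: pabs_mult[OF p] mult_le_one)
  ultimately show ?case using pabs_int_le1[OF p, of a] by simp
qed

lemma padic_poly_lip:
  assumes p: "prime p" and x: "padic_abs p x \<le> 1" and y: "padic_abs p y \<le> 1"
  shows "padic_abs p (poly (map_poly of_int f) x - poly (map_poly of_int f) y) \<le> padic_abs p (x - y)"
proof (induction f rule: pCons_induct)
  case 0 thus ?case by (simp add: pabs_nonneg)
next
  case (pCons a g)
  let ?gx = "poly (map_poly of_int g) x" and ?gy = "poly (map_poly of_int g) y"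
  have e: "(of_int a + x * ?gx) - (of_int a + y * ?gy) = x * (?gx - ?gy) + (x - y) * ?gy"
    by (simp add: algebra_simps)
  have "padic_abs p (x * (?gx - ?gy)) \<le> padic_abs p (x - y)"
    unfolding pabs_mult[OF p]
    by (rule order_trans[OF mult_left_le_one_le pCons.IH]) (use x pabs_nonneg[of p] in auto)
  moreover have "padic_abs p ((x - y) * ?gy) \<le> padic_abs p (x - y)"
    using padic_poly_le1[OF p y, of g] pabs_nonneg[of p] by (simp add: pabs_mult[OF p] mult_right_le_one_le)
  ultimately show ?case using pabs_ultra[OF p, of "x * (?gx - ?gy)" "(x - y) * ?gy"] e by simp
qed



lemma pabs_power: "prime p \<Longrightarrow> padic_abs p (x ^ k) = padic_abs p x ^ k"
  by (induction k) (simp_all add: pabs_mult)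

lemma padic_poly_scaled:
  assumes p: "prime p" and bx: "padic_abs p (of_int b * x) \<le> 1" and "padic_abs p (of_int b * y) \<le> 1"
  shows "padic_abs p (of_int b) ^ degree f * padic_abs p (poly (map_poly of_int f) x - poly (map_poly of_int f) y)
            \<le> padic_abs p (of_int b * x - of_int b * y)"
    and "padic_abs p (of_int b) ^ degree f * padic_abs p (poly (map_poly of_int f) x) \<le> 1"
proof -
  obtain G :: "int poly" where G: "\<And>z :: rat. of_int b ^ degree f * poly (map_poly of_int f) z =
       poly (map_poly of_int G) (of_int b * z)" using poly_scale[of f "degree f" b] by blast
  have "padic_abs p (of_int b) ^ degree f * padic_abs p (poly (map_poly of_int f) x - poly (map_poly of_int f) y)
     = padic_abs p (poly (map_poly of_int G) (of_int b * x) - poly (map_poly of_int G) (of_int b * y))"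
    by (simp add: pabs_mult[OF p, symmetric] pabs_power[OF p, symmetric] right_diff_distrib G)
  also have "\<dots> \<le> padic_abs p (of_int b * x - of_int b * y)"
    by (rule padic_poly_lip[OF p]) fact+
  finally show "padic_abs p (of_int b) ^ degree f * padic_abs p (poly (map_poly of_int f) x - poly (map_poly of_int f) y)
            \<le> padic_abs p (of_int b * x - of_int b * y)" .
  have "padic_abs p (of_int b) ^ degree f * padic_abs p (poly (map_poly of_int f) x)
     = padic_abs p (poly (map_poly of_int G) (of_int b * x))"
    by (simp add: pabs_mult[OF p, symmetric] pabs_power[OF p, symmetric] G)
  also have "\<dots> \<le> 1" by (rule padic_poly_le1[OF p bx])
  finally show "padic_abs p (of_int b) ^ degree f * padic_abs p (poly (map_poly of_int f) x) \<le> 1" .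
qed

lemma pnorm_lim:
  assumes p: "prime p" and c: "padic_cauchy p x"
  shows "(\<lambda>k. padic_abs p (x k)) \<longlonglongrightarrow> padic_norm p x"
proof -
  have "Cauchy (\<lambda>k. padic_abs p (x k))"
  proof (rule metric_CauchyI)
    fix e :: real assume "e > 0"
    then obtain N where N: "\<forall>j\<ge>N. \<forall>k\<ge>N. padic_abs p (x j - x k) < e"
      using c unfolding padic_cauchy_def by blast
    show "\<exists>M. \<forall>m\<ge>M. \<forall>n\<ge>M. dist (padic_abs p (x m)) (padic_abs p (x n)) < e"
      using N pabs_diff_abs[OF p] by (metis dist_real_def order.strict_trans1)
  qed
  hence "convergent (\<lambda>k. padic_abs p (x k))" by (simp add: Cauchy_convergent)
  thus ?thesis unfolding padic_norm_def by (simp add: convergent_LIMSEQ_iff)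
qed

lemma pnorm_nonneg: assumes p: "prime p" and c: "padic_cauchy p x" shows "padic_norm p x \<ge> 0"
  using pnorm_lim[OF p c] by (rule tendsto_lowerbound) (simp_all add: pabs_nonneg)

lemma pnorm_le:
  assumes p: "prime p" and c: "padic_cauchy p x" and ev: "eventually (\<lambda>k. padic_abs p (x k) \<le> C) sequentially"
  shows "padic_norm p x \<le> C"
  using pnorm_lim[OF p c] by (rule tendsto_upperbound) (use ev in simp_all)

lemma pnorm_eq:
  assumes ev: "eventually (\<lambda>k. padic_abs p (x k) = C) sequentially"
  shows "padic_norm p x = C"
proof -
  have "(\<lambda>k. padic_abs p (x k)) \<longlonglongrightarrow> C"
    by (rule tendsto_eventually) (use ev in simp)
  thus ?thesis unfolding padic_norm_def by (rule limI)
qed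

lemma pnorm_lt:
  assumes p: "prime p" and c: "padic_cauchy p x" and "padic_norm p x < C"
  shows "eventually (\<lambda>k. padic_abs p (x k) < C) sequentially"
  using order_tendstoD(2)[OF pnorm_lim[OF p c] assms(3)] .

lemma pnorm_lt1:
  assumes p: "prime p" and c: "padic_cauchy p x" and "padic_norm p x < 1"
  shows "padic_norm p x \<le> 1 / real p"
  using pnorm_lt[OF p c assms(3)] pabs_lt1[OF p]
  by (intro pnorm_le[OF p c]) (auto elim: eventually_mono)

lemma cauchy_shift: "padic_cauchy p x \<Longrightarrow> padic_cauchy p (\<lambda>j. x j - c)"
  unfolding padic_cauchy_def by simp

lemma cauchy_poly:
  assumes p: "prime p" and c: "padic_cauchy p x"
  shows "padic_cauchy p (\<lambda>j. poly (map_poly of_int f) (x j))"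
proof -
  obtain N where N: "\<forall>j\<ge>N. \<forall>k\<ge>N. padic_abs p (x j - x k) < 1"
    using c unfolding padic_cauchy_def by (meson zero_less_one)
  obtain b :: int where b: "b \<noteq> 0" "padic_abs p (of_int b * x N) \<le> 1"
  proof (cases "x N = 0")
    case True thus ?thesis using that[of 1] by simp
  next
    case False
    then obtain a b where ab: "a \<noteq> 0" "b \<noteq> 0" "x N = of_int a / of_int b" using rat_repr by blast
    hence "of_int b * x N = of_int a" by simp
    thus ?thesis using that[of b] ab pabs_int_le1[OF p, of a] by simp
  qed
  have bx: "padic_abs p (of_int b * x j) \<le> 1" if "j \<ge> N" for j
  proof -
    have "padic_abs p (of_int b * (x j - x N)) \<le> 1"
      using N that pabs_int_le1[OF p, of b] pabs_nonneg[of p]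
      by (simp add: pabs_mult[OF p]) (meson less_imp_le mult_le_one order_refl)
    thus ?thesis using pabs_tri[OF p, of "of_int b * x j" "of_int b * x N"] b
      by (simp add: right_diff_distrib)
  qed
  have bpos: "padic_abs p (of_int b) ^ degree f > 0"
    using b pabs_eq0[OF p, of "of_int b"] pabs_nonneg[of p "of_int b"] by simp
  show ?thesis unfolding padic_cauchy_def
  proof (intro allI impI)
    fix e :: real assume e: "e > 0"
    then obtain M where M: "\<forall>j\<ge>M. \<forall>k\<ge>M. padic_abs p (x j - x k) < e * padic_abs p (of_int b) ^ degree f"
      using c bpos unfolding padic_cauchy_def by (meson mult_pos_pos)
    show "\<exists>M. \<forall>j\<ge>M. \<forall>k\<ge>M. padic_abs p (poly (map_poly of_int f) (x j) - poly (map_poly of_int f) (x k)) < e"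
    proof (intro exI[of _ "max M N"] allI impI)
      fix j k assume jk: "j \<ge> max M N" "k \<ge> max M N"
      have "padic_abs p (of_int b) ^ degree f * padic_abs p (poly (map_poly of_int f) (x j) - poly (map_poly of_int f) (x k))
          \<le> padic_abs p (of_int b * x j - of_int b * x k)"
        using padic_poly_scaled(1)[OF p bx bx] jk by simp
      also have "\<dots> = padic_abs p (of_int b) * padic_abs p (x j - x k)"
        by (simp add: pabs_mult[OF p, symmetric] right_diff_distrib)
      also have "\<dots> \<le> padic_abs p (x j - x k)"
        using pabs_int_le1[OF p, of b] pabs_nonneg[of p] by (simp add: mult_left_le_one_le)
      also have "\<dots> < e * padic_abs p (of_int b) ^ degree f" using M jk by simp
      finally show "padic_abs p (poly (map_poly of_int f) (x j) - poly (map_poly of_int f) (x k)) < e"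
        using bpos by (simp add: mult.commute)
    qed
  qed
qed



lemma tendsto_fun_iff:
  "((X :: nat \<Rightarrow> 'a \<Rightarrow> real) \<longlonglongrightarrow> l) \<longleftrightarrow> (\<forall>f. (\<lambda>i. X i f) \<longlonglongrightarrow> l f)"
  using limitin_componentwise[of "\<lambda>i. euclidean" UNIV X l sequentially]
  by (simp add: euclidean_product_topology)

lemma open_coord: "open {x::'a \<Rightarrow> real. x i \<in> U}" if "open U"
proof -
  have "open ((\<lambda>x. x i) -` U)"
    by (rule open_vimage[OF that]) (simp add: continuous_on_product_coordinates)
  thus ?thesis by (simp add: vimage_def)
qed

lemma muQ0_const: "muQ0 r [:c:] = (if c = 0 then 0 else 1)"
  by (simp add: muQ0_def)

lemma muF_const: "muF p a [:c:] = (if int p dvd c then 0 else 1)"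
  by (simp add: muF_def cong_0_iff)

lemma muR_const: "muR v t [:c:] = \<bar>real_of_int c\<bar> powr v"
  by (simp add: muR_def)

lemma muQp_const: "muQp p w x [:c:] = padic_abs p (of_int c) powr w"
  by (simp add: muQp_def pnorm_eq)

lemma muQp_const_le1: "prime p \<Longrightarrow> w > 0 \<Longrightarrow> muQp p w x [:c:] \<le> 1"
  using pabs_int_le1[of p c] pabs_nonneg[of p "of_int c"]
  by (simp add: muQp_const powr_le1)

lemma muF_01: "muF p a f = 0 \<or> muF p a f = 1" by (simp add: muF_def)
lemma muQ0_01: "muQ0 r f = 0 \<or> muQ0 r f = 1" by (simp add: muQ0_def)

lemma prime_dvd_prime_eq: "prime (p::nat) \<Longrightarrow> prime q \<Longrightarrow> int p dvd int q \<Longrightarrow> p = q"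
  by (simp add: primes_dvd_imp_eq)

lemma Amin_cases:
  assumes "\<phi> \<in> Amin"
  obtains (Q0) r where "\<phi> = muQ0 r"
    | (F) p a where "prime p" "\<phi> = muF p a" "0 \<le> a" "a < int p"
    | (R) v t where "\<phi> = muR v t" "0 < v" "v \<le> 1"
    | (Qp) p w x where "prime p" "\<phi> = muQp p w x" "w > 0" "padic_cauchy p x"
proof -
  have "\<phi> \<in> UQ0 \<or> (\<exists>p. prime p \<and> \<phi> \<in> UF p) \<or> \<phi> \<in> UR \<or> (\<exists>p. prime p \<and> \<phi> \<in> Uq p)"
    using assms unfolding Amin_def by blast
  thus ?thesis
  proof (elim disjE exE conjE)
    assume "\<phi> \<in> UQ0" thus ?thesis using that(1) unfolding UQ0_def by blast
  next
    fix p assume "prime p" "\<phi> \<in> UF p" thus ?thesis using that(2) unfolding UF_def by force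
  next
    assume "\<phi> \<in> UR" thus ?thesis using that(3) unfolding UR_def by force
  next
    fix p assume "prime p" "\<phi> \<in> Uq p" thus ?thesis using that(4) unfolding Uq_def by force
  qed
qed

lemma partb_UR: "openin (top_of_set Amin) UR"
proof -
  let ?T = "{\<phi>::seminorm. \<phi> [:2:] \<in> {1<..}}"
  have "UR = Amin \<inter> ?T"
  proof
    show "UR \<subseteq> Amin \<inter> ?T"
    proof
      fix \<phi> assume "\<phi> \<in> UR"
      then obtain v t where "\<phi> = muR v t" "v \<in> {0<..1}" unfolding UR_def by blast
      thus "\<phi> \<in> Amin \<inter> ?T" unfolding Amin_def using \<open>\<phi> \<in> UR\<close> by (auto simp: muR_const)
    qed
    show "Amin \<inter> ?T \<subseteq> UR"
    proof
      fix \<phi> assume h: "\<phi> \<in> Amin \<inter> ?T"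
      hence "\<phi> \<in> Amin" by simp
      thus "\<phi> \<in> UR"
      proof (cases rule: Amin_cases)
        case (Q0 r) thus ?thesis using h by (simp add: muQ0_const)
      next
        case (F p a) thus ?thesis using h muF_01[of p a "[:2:]"] by auto
      next
        case (R v t) thus ?thesis unfolding UR_def by auto
      next
        case (Qp p w x) thus ?thesis using h muQp_const_le1[of p w x 2] by auto
      qed
    qed
  qed
  moreover have "open ?T" by (rule open_coord) simp
  ultimately show ?thesis by (auto simp: openin_open)
qed


lemma partb_Uq: assumes q: "prime q" shows "openin (top_of_set Amin) (Uq q)"
proof -
  let ?T = "{\<phi>::seminorm. \<phi> [:int q:] \<in> {0<..<1}}"
  have q1: "real q > 1" using prime_gt_1_nat[OF q] by simp
  have "Uq q = Amin \<inter> ?T"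
  proof
    show "Uq q \<subseteq> Amin \<inter> ?T"
    proof
      fix \<phi> assume "\<phi> \<in> Uq q"
      then obtain w x where wx: "\<phi> = muQp q w x" "w > 0" "padic_cauchy q x" unfolding Uq_def by blast
      have "muQp q w x [:int q:] = (1 / real q) powr w"
        using muQp_const[of q w x "int q"] pabs_p[OF q] by simp
      moreover have "(1 / real q) powr w < 1" using q1 wx using powr_less_mono2[of w "1 / real q" 1] by simp
      moreover have "(1 / real q) powr w > 0" using q1 by simp
      ultimately show "\<phi> \<in> Amin \<inter> ?T" unfolding Amin_def using \<open>\<phi> \<in> Uq q\<close> wx q by auto
    qed
    show "Amin \<inter> ?T \<subseteq> Uq q"
    proof
      fix \<phi> assume h: "\<phi> \<in> Amin \<inter> ?T"
      hence "\<phi> \<in> Amin" by simp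
      thus "\<phi> \<in> Uq q"
      proof (cases rule: Amin_cases)
        case (Q0 r) thus ?thesis using h q by (simp add: muQ0_const)
      next
        case (F p a) thus ?thesis using h muF_01[of p a "[:int q:]"] by auto
      next
        case (R v t)
        have "real q powr v > 1" using q1 R by simp
        thus ?thesis using h R by (simp add: muR_const)
      next
        case (Qp p w x)
        show ?thesis
        proof (cases "p = q")
          case True thus ?thesis using Qp unfolding Uq_def by auto
        next
          case False
          have "padic_abs p (of_int (int q)) = 1"
            using pabs_int_eq1[OF Qp(1)] prime_dvd_prime_eq[OF Qp(1) q] False by blast
          thus ?thesis using h Qp by (simp add: muQp_const)
        qed
      qed
    qed
  qed
  moreover have "open ?T" by (rule open_coord) simp
  ultimately show ?thesis by (auto simp: openin_open)
qed


lemma partb_UFq: assumes q: "prime q" shows "openin (top_of_set Amin) (UF q \<union> Uq q)"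
proof -
  let ?T = "{\<phi>::seminorm. \<phi> [:int q:] \<in> {..<1}}"
  have q1: "real q > 1" using prime_gt_1_nat[OF q] by simp
  have "UF q \<union> Uq q = Amin \<inter> ?T"
  proof
    show "UF q \<union> Uq q \<subseteq> Amin \<inter> ?T"
    proof
      fix \<phi> assume "\<phi> \<in> UF q \<union> Uq q"
      thus "\<phi> \<in> Amin \<inter> ?T"
      proof
        assume "\<phi> \<in> UF q"
        then obtain a where "\<phi> = muF q a" unfolding UF_def by blast
        thus ?thesis unfolding Amin_def using \<open>\<phi> \<in> UF q\<close> q by (auto simp: muF_const)
      next
        assume "\<phi> \<in> Uq q"
        then obtain w x where wx: "\<phi> = muQp q w x" "w > 0" "padic_cauchy q x" unfolding Uq_def by blast
        have "muQp q w x [:int q:] = (1 / real q) powr w"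
          using muQp_const[of q w x "int q"] pabs_p[OF q] by simp
        moreover have "(1 / real q) powr w < 1" using q1 wx using powr_less_mono2[of w "1 / real q" 1] by simp
        ultimately show "\<phi> \<in> Amin \<inter> ?T" unfolding Amin_def using \<open>\<phi> \<in> Uq q\<close> wx q by auto
      qed
    qed
    show "Amin \<inter> ?T \<subseteq> UF q \<union> Uq q"
    proof
      fix \<phi> assume h: "\<phi> \<in> Amin \<inter> ?T"
      hence "\<phi> \<in> Amin" by simp
      thus "\<phi> \<in> UF q \<union> Uq q"
      proof (cases rule: Amin_cases)
        case (Q0 r) thus ?thesis using h q by (simp add: muQ0_const)
      next
        case (F p a)
        have "int p dvd int q" using h F by (auto simp: muF_const split: if_splits)
        hence "p = q" using prime_dvd_prime_eq F q by blast
        thus ?thesis using F unfolding UF_def by auto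
      next
        case (R v t)
        have "real q powr v > 1" using q1 R by simp
        thus ?thesis using h R by (simp add: muR_const)
      next
        case (Qp p w x)
        show ?thesis
        proof (cases "p = q")
          case True thus ?thesis using Qp unfolding Uq_def by auto
        next
          case False
          have "padic_abs p (of_int (int q)) = 1"
            using pabs_int_eq1[OF Qp(1)] prime_dvd_prime_eq[OF Qp(1) q] False by blast
          thus ?thesis using h Qp by (simp add: muQp_const)
        qed
      qed
    qed
  qed
  moreover have "open ?T" by (rule open_coord) simp
  ultimately show ?thesis by (auto simp: openin_open)
qed


lemma partc_Q0: "discrete_subspace UQ0"
  unfolding discrete_subspace_def
proof
  fix \<phi> assume "\<phi> \<in> UQ0"
  then obtain r where r: "\<phi> = muQ0 r" unfolding UQ0_def by blast
  obtain a b where q: "quotient_of r = (a, b)" by fastforce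
  have rab: "r = of_int a / of_int b" and b: "b > 0"
    using quotient_of_div[OF q] quotient_of_denom_pos[OF q] by auto
  let ?f = "[:-a, b:]"
  let ?T = "{\<psi>::seminorm. \<psi> ?f \<in> {..<1}}"
  have "{\<phi>} = UQ0 \<inter> ?T"
  proof
    have "muQ0 r ?f = 0" using rab b by (simp add: muQ0_def)
    thus "{\<phi>} \<subseteq> UQ0 \<inter> ?T" using r \<open>\<phi> \<in> UQ0\<close> by auto
    show "UQ0 \<inter> ?T \<subseteq> {\<phi>}"
    proof
      fix \<psi> assume h: "\<psi> \<in> UQ0 \<inter> ?T"
      then obtain r' where r': "\<psi> = muQ0 r'" unfolding UQ0_def by blast
      have "muQ0 r' ?f = 0" using h r' muQ0_01[of r' ?f] by auto
      hence "- of_int a + of_int b * r' = 0" by (simp add: muQ0_def mult.commute split: if_splits)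
      hence "r' * of_int b = r * of_int b" using rab b by (simp add: mult.commute[of r'])
      hence "r' = r" using b by simp
      thus "\<psi> \<in> {\<phi>}" using r r' by simp
    qed
  qed
  moreover have "open ?T" by (rule open_coord) simp
  ultimately show "openin (top_of_set UQ0) {\<phi>}" by (auto simp: openin_open)
qed


lemma partc_F: "discrete_subspace (\<Union>p\<in>{p. prime p}. UF p)"
  unfolding discrete_subspace_def
proof
  fix \<phi> assume "\<phi> \<in> (\<Union>p\<in>{p. prime p}. UF p)"
  then obtain p a where pa: "prime p" "\<phi> = muF p a" "0 \<le> a" "a < int p" unfolding UF_def by auto
  let ?T = "{\<psi>::seminorm. \<psi> [:int p:] \<in> {..<1}} \<inter> {\<psi>::seminorm. \<psi> [:-a, 1:] \<in> {..<1}}"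
  let ?U = "(\<Union>p\<in>{p. prime p}. UF p)"
  have "{\<phi>} = ?U \<inter> ?T"
  proof
    have "muF p a [:int p:] = 0" "muF p a [:-a, 1:] = 0"
      by (simp_all add: muF_def cong_0_iff)
    thus "{\<phi>} \<subseteq> ?U \<inter> ?T" using pa \<open>\<phi> \<in> ?U\<close> by auto
    show "?U \<inter> ?T \<subseteq> {\<phi>}"
    proof
      fix \<psi> assume h: "\<psi> \<in> ?U \<inter> ?T"
      then obtain p' a' where pa': "prime p'" "\<psi> = muF p' a'" "0 \<le> a'" "a' < int p'" unfolding UF_def by auto
      have "muF p' a' [:int p:] = 0" using h pa' muF_01[of p' a' "[:int p:]"] by auto
      hence "int p' dvd int p" by (simp add: muF_const split: if_splits)
      hence pp: "p' = p" using prime_dvd_prime_eq pa pa' by blast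
      have "muF p a' [:-a, 1:] = 0" using h pa' pp muF_01[of p a' "[:-a, 1:]"] by auto
      hence "[a' - a = 0] (mod int p)" by (simp add: muF_def split: if_splits)
      hence "[a' = a] (mod int p)" by (simp add: cong_diff_iff_cong_0)
      hence "a' mod int p = a mod int p" by (simp add: cong_def)
      hence "a' = a" using pa pa' pp by simp
      thus "\<psi> \<in> {\<phi>}" using pa pa' pp by simp
    qed
  qed
  moreover have "open ?T" by (intro open_Int open_coord) simp_all
  ultimately show "openin (top_of_set ?U) {\<phi>}" by (auto simp: openin_open)
qed




lemma poly_of_int_hom: "poly (map_poly of_int f) (of_int x :: 'a :: comm_ring_1) = of_int (poly f x)"
  by (induction f rule: pCons_induct) simp_all

lemma poly_cong_int: "[x = y] (mod p) \<Longrightarrow> [poly f x = poly f (y::int)] (mod p)"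
  by (induction f rule: pCons_induct) (simp_all add: cong_add cong_mult)

lemma scale_G:
  fixes f :: "int poly" and n m :: int
  assumes n: "n \<noteq> 0"
  obtains G :: "int poly" where
    "\<And>x::rat. of_int n ^ degree f * poly (map_poly of_int f) x = poly (map_poly of_int G) (of_int n * x)"
    "\<And>x::int. n ^ degree f * poly f x = poly G (n * x)"
    "poly (map_poly of_int f) (of_int m / of_int n :: rat) = 0 \<longleftrightarrow> poly G m = 0"
proof -
  obtain G :: "int poly" where G: "\<And>x::rat. of_int n ^ degree f * poly (map_poly of_int f) x =
       poly (map_poly of_int G) (of_int n * x)" using poly_scale[of f "degree f" n] by blast
  have 2: "n ^ degree f * poly f x = poly G (n * x)" for x :: int
  proof -
    have "(of_int (n ^ degree f * poly f x) :: rat) = of_int (poly G (n * x))"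
      using G[of "of_int x"] by (simp add: poly_of_int_hom[symmetric])
    thus ?thesis by (simp only: of_int_eq_iff)
  qed
  have "of_int n * (of_int m / of_int n :: rat) = of_int m" using n by simp
  hence "of_int n ^ degree f * poly (map_poly of_int f) (of_int m / of_int n :: rat) = of_int (poly G m)"
    using G[of "of_int m / of_int n"] poly_of_int_hom[of G m] by simp
  hence 3: "poly (map_poly of_int f) (of_int m / of_int n :: rat) = 0 \<longleftrightarrow> poly G m = 0"
    using n by (metis mult_eq_0_iff of_int_0_eq_iff power_not_zero)
  show ?thesis using that[OF G 2 3] .
qed

lemma ev01:
  assumes "X \<longlonglongrightarrow> c" "\<And>i. X i = 0 \<or> X i = 1" "c = 0 \<or> c = (1::real)"
  shows "eventually (\<lambda>i. X i = c) sequentially"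
proof -
  have "eventually (\<lambda>i. dist (X i) c < 1/2) sequentially"
    using tendsto_iff[THEN iffD1, OF assms(1), rule_format, of "1/2"] by simp
  thus ?thesis
  proof (rule eventually_mono)
    fix i assume "dist (X i) c < 1/2"
    thus "X i = c" using assms(2)[of i] assms(3) by (auto simp: dist_real_def)
  qed
qed

lemma coprime_prime_int: "prime (p::nat) \<Longrightarrow> \<not> int p dvd k \<Longrightarrow> coprime k (int p)"
  by (metis coprime_commute prime_imp_coprime prime_nat_int_transfer)

lemma frac_mod_spec:
  assumes p: "prime p" and nd: "\<not> int p dvd n"
  shows "0 \<le> frac_mod p m n \<and> frac_mod p m n < int p \<and> [n * frac_mod p m n = m] (mod int p)"
proof -
  have cp: "coprime n (int p)" using coprime_prime_int[OF p nd] .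
  obtain x where x: "[n * x = m] (mod int p)"
    using cong_solve_dvd_int[of n "int p" m] cp by auto
  have pp: "int p > 0" using prime_gt_0_nat[OF p] by simp
  let ?y = "x mod int p"
  have "[?y = x] (mod int p)" by (simp add: cong_def)
  hence "[n * ?y = m] (mod int p)" using x by (meson cong_scalar_left cong_trans)
  moreover have "0 \<le> ?y" "?y < int p" using pp by simp_all
  moreover have "z = ?y" if "0 \<le> z" "z < int p" "[n * z = m] (mod int p)" for z
  proof -
    have "[n * z = n * ?y] (mod int p)" using that(3) \<open>[n * ?y = m] (mod int p)\<close> by (meson cong_sym cong_trans)
    hence "[z = ?y] (mod int p)" using cong_mult_lcancel[OF cp] by blast
    thus ?thesis using that pp by (simp add: cong_def)
  qed
  ultimately have "\<exists>!z. 0 \<le> z \<and> z < int p \<and> [n * z = m] (mod int p)" by blast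
  thus ?thesis unfolding frac_mod_def by (rule theI')
qed

lemma frac_mod_eq:
  assumes p: "prime p" and nd: "\<not> int p dvd n" and "0 \<le> x" "x < int p" "[n * x = m] (mod int p)"
  shows "frac_mod p m n = x"
proof -
  have cp: "coprime n (int p)" using coprime_prime_int[OF p nd] .
  note s = frac_mod_spec[OF p nd, of m]
  have "[n * x = n * frac_mod p m n] (mod int p)" using s assms(5) by (meson cong_sym cong_trans)
  hence "[x = frac_mod p m n] (mod int p)" using cong_mult_lcancel[OF cp] by blast
  thus ?thesis using assms s by (simp add: cong_def)
qed

lemma big_prime_ndvd: "prime (p::nat) \<Longrightarrow> int p > \<bar>k\<bar> \<Longrightarrow> k \<noteq> 0 \<Longrightarrow> \<not> int p dvd k"
  using dvd_imp_le_int[of k "int p"] by auto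

lemma parte:
  fixes m :: int and n :: nat and p :: "nat \<Rightarrow> nat" and k :: "nat \<Rightarrow> int"
  assumes n: "n \<ge> 1" and pr: "\<forall>i. prime (p i)"
  shows "(\<lambda>i. muF (p i) (Phi (p i) (k i))) \<longlonglongrightarrow> muQ0 (of_int m / of_nat n) \<longleftrightarrow>
        (filterlim p at_top sequentially \<and>
         (\<exists>i0. \<forall>i\<ge>i0. Phi (p i) (k i) = frac_mod (p i) m (int n)))"
proof
  assume L: "(\<lambda>i. muF (p i) (Phi (p i) (k i))) \<longlonglongrightarrow> muQ0 (of_int m / of_nat n)"
  have evf: "eventually (\<lambda>i. muF (p i) (Phi (p i) (k i)) f = muQ0 (of_int m / of_nat n) f) sequentially" for f
  proof (rule ev01)
    show "(\<lambda>i. muF (p i) (Phi (p i) (k i)) f) \<longlonglongrightarrow> muQ0 (of_int m / of_nat n) f"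
      using L unfolding tendsto_fun_iff by blast
  qed (rule muF_01, rule muQ0_01)
  have big: "eventually (\<lambda>i. B < p i) sequentially" for B
  proof -
    have "fact B \<noteq> (0::int)" by simp
    hence "eventually (\<lambda>i. muF (p i) (Phi (p i) (k i)) [:fact B:] = 1) sequentially"
      using evf[of "[:fact B:]"] by (simp add: muQ0_const)
    thus ?thesis
    proof (rule eventually_mono)
      fix i assume "muF (p i) (Phi (p i) (k i)) [:fact B:] = 1"
      hence "\<not> int (p i) dvd fact B" by (simp add: muF_const split: if_splits)
      hence "\<not> p i dvd fact B"
      proof (rule contrapos_nn)
        assume "p i dvd fact B"
        hence "int (p i) dvd int (fact B)" by (simp only: int_dvd_int_iff)
        thus "int (p i) dvd fact B" by (simp only: of_nat_fact)
      qed
      thus "B < p i" using prime_dvd_fact_iff[of "p i" B] pr by simp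
    qed
  qed
  have "filterlim p at_top sequentially"
    unfolding filterlim_at_top
  proof (intro allI)
    fix Z show "eventually (\<lambda>x. Z \<le> p x) sequentially" using big[of Z] by (rule eventually_mono) simp
  qed
  moreover have "eventually (\<lambda>i. Phi (p i) (k i) = frac_mod (p i) m (int n)) sequentially"
  proof -
    have r0: "muQ0 (of_int m / of_nat n) [:-m, int n:] = 0"
      using n by (simp add: muQ0_def)
    show ?thesis using evf[of "[:-m, int n:]"] big[of n]
    proof eventually_elim
      case (elim i)
      let ?a = "Phi (p i) (k i)"
      have pp: "int (p i) > 0" using pr prime_gt_0_nat by simp
      have "muF (p i) ?a [:-m, int n:] = 0" using elim(1) r0 by simp
      hence "[poly [:-m, int n:] ?a = 0] (mod int (p i))" unfolding muF_def by (auto split: if_splits)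
      hence d: "int (p i) dvd (- m + ?a * int n)" by (simp add: cong_0_iff)
      have e: "int n * ?a - m = - m + ?a * int n" by simp
      have c: "[int n * ?a = m] (mod int (p i))" unfolding cong_iff_dvd_diff e by (rule d)
      have nd: "\<not> int (p i) dvd int n" using elim(2) n by (simp add: int_dvd_int_iff nat_dvd_not_less)
      show ?case by (rule frac_mod_eq[symmetric]) (use pr nd c pp in \<open>auto simp: Phi_def\<close>)
    qed
  qed
  ultimately show "filterlim p at_top sequentially \<and> (\<exists>i0. \<forall>i\<ge>i0. Phi (p i) (k i) = frac_mod (p i) m (int n))"
    by (simp add: eventually_sequentially)
next
  assume R: "filterlim p at_top sequentially \<and> (\<exists>i0. \<forall>i\<ge>i0. Phi (p i) (k i) = frac_mod (p i) m (int n))"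
  hence ev: "eventually (\<lambda>i. Phi (p i) (k i) = frac_mod (p i) m (int n)) sequentially"
    by (simp add: eventually_sequentially)
  have big: "eventually (\<lambda>i. B < p i) sequentially" for B
  proof -
    have "eventually (\<lambda>x. Suc B \<le> p x) sequentially" using R by (simp add: filterlim_at_top)
    thus ?thesis by (rule eventually_mono) simp
  qed
  show "(\<lambda>i. muF (p i) (Phi (p i) (k i))) \<longlonglongrightarrow> muQ0 (of_int m / of_nat n)"
    unfolding tendsto_fun_iff
  proof
    fix f :: "int poly"
    have n0: "int n \<noteq> 0" using n by simp
    obtain G where G1: "\<And>x::rat. of_int (int n) ^ degree f * poly (map_poly of_int f) x = poly (map_poly of_int G) (of_int (int n) * x)"
      and G2: "\<And>x::int. int n ^ degree f * poly f x = poly G (int n * x)"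
      and G3: "poly (map_poly of_int f) (of_int m / of_int (int n) :: rat) = 0 \<longleftrightarrow> poly G m = 0"
      by (rule scale_G[OF n0, of f m]) blast
    have "eventually (\<lambda>i. muF (p i) (Phi (p i) (k i)) f = muQ0 (of_int m / of_nat n) f) sequentially"
      using ev big[of "n + nat \<bar>poly G m\<bar>"]
    proof eventually_elim
      case (elim i)
      let ?a = "Phi (p i) (k i)"
      have pi: "prime (p i)" using pr by simp
      have pint: "prime (int (p i))" using pi by (simp add: prime_nat_int_transfer)
      have nd: "\<not> int (p i) dvd int n" using elim(2) n
        by (simp add: int_dvd_int_iff nat_dvd_not_less)
      have ndD: "\<not> int (p i) dvd int n ^ degree f"
        using nd pint prime_dvd_power[of "int (p i)" "int n" "degree f"] by blast
      have "[int n * ?a = m] (mod int (p i))" using frac_mod_spec[OF pi nd, of m] elim(1) by simp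
      hence "[poly G (int n * ?a) = poly G m] (mod int (p i))" by (rule poly_cong_int)
      hence c: "[int n ^ degree f * poly f ?a = poly G m] (mod int (p i))" using G2 by simp
      show ?case
      proof (cases "poly G m = 0")
        case True
        hence "int (p i) dvd int n ^ degree f * poly f ?a" using c by (simp add: cong_0_iff)
        hence "int (p i) dvd poly f ?a" using ndD pint by (simp add: prime_dvd_mult_iff)
        moreover have "muQ0 (of_int m / of_nat n) f = 0" using G3 True by (simp add: muQ0_def)
        ultimately show ?thesis by (simp add: muF_def cong_0_iff)
      next
        case False
        have "\<not> int (p i) dvd poly G m" using big_prime_ndvd[OF pi _ False] elim(2) by simp
        hence "\<not> int (p i) dvd int n ^ degree f * poly f ?a" using cong_dvd_iff[OF c] by blast
        hence "\<not> int (p i) dvd poly f ?a" using dvd_mult[of "int (p i)" "poly f ?a" "int n ^ degree f"] by blast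
        moreover have "muQ0 (of_int m / of_nat n) f = 1" using G3 False by (simp add: muQ0_def)
        ultimately show ?thesis by (simp add: muF_def cong_0_iff)
      qed
    qed
    thus "(\<lambda>i. muF (p i) (Phi (p i) (k i)) f) \<longlonglongrightarrow> muQ0 (of_int m / of_nat n) f"
      by (rule tendsto_eventually)
  qed
qed



lemma poly_of_rat_hom: "poly (map_poly of_int f) (of_rat x :: real) = of_rat (poly (map_poly of_int f) x)"
  by (induction f rule: pCons_induct) (simp_all add: of_rat_add of_rat_mult)

lemma muQ0_real: "muQ0 r f = (if poly (map_poly of_int f) (of_rat r :: real) = 0 then 0 else 1)"
  by (simp add: muQ0_def poly_of_rat_hom)

lemma sandwich0:
  fixes X Y :: "nat \<Rightarrow> real"
  assumes "eventually (\<lambda>i. 0 \<le> X i \<and> X i \<le> Y i) sequentially" "Y \<longlonglongrightarrow> 0"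
  shows "X \<longlonglongrightarrow> 0"
  by (rule tendsto_sandwich[of "\<lambda>_. 0" X sequentially Y]) (use assms in \<open>auto elim: eventually_mono\<close>)

lemma partf:
  fixes m :: int and n :: nat and v t :: "nat \<Rightarrow> real"
  assumes n: "n \<ge> 1" and vv: "\<forall>i. v i \<in> {0<..1}"
  shows "(\<lambda>i. muR (v i) (t i)) \<longlonglongrightarrow> muQ0 (of_int m / of_nat n) \<longleftrightarrow>
        (v \<longlonglongrightarrow> 0 \<and> (\<lambda>i. \<bar>t i - of_int m / of_nat n\<bar> powr v i) \<longlonglongrightarrow> 0)"
proof -
  define r :: real where "r = of_int m / of_nat n"
  have rr: "(of_rat (of_int m / of_nat n) :: real) = r" unfolding r_def by (simp add: of_rat_divide)
  have v0: "v i > 0" "v i \<le> 1" for i using vv by auto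
  have nr: "real n * r = of_int m" using n unfolding r_def by simp
  show ?thesis unfolding r_def[symmetric]
  proof
    assume L: "(\<lambda>i. muR (v i) (t i)) \<longlonglongrightarrow> muQ0 (of_int m / of_nat n)"
    have "(\<lambda>i. muR (v i) (t i) [:2:]) \<longlonglongrightarrow> muQ0 (of_int m / of_nat n) [:2:]"
      using L unfolding tendsto_fun_iff by blast
    hence "(\<lambda>i. 2 powr v i) \<longlonglongrightarrow> 1" by (simp add: muR_const muQ0_const)
    hence "(\<lambda>i. ln (2 powr v i) / ln 2) \<longlonglongrightarrow> ln 1 / ln 2"
      by (intro tendsto_intros) auto
    hence V: "v \<longlonglongrightarrow> 0" by simp
    have "(\<lambda>i. muR (v i) (t i) [:-m, int n:]) \<longlonglongrightarrow> muQ0 (of_int m / of_nat n) [:-m, int n:]"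
      using L unfolding tendsto_fun_iff by blast
    moreover have "muQ0 (of_int m / of_nat n) [:-m, int n:] = 0" using n by (simp add: muQ0_def)
    ultimately have Y: "(\<lambda>i. \<bar>- of_int m + t i * real n\<bar> powr v i) \<longlonglongrightarrow> 0" by (simp add: muR_def)
    have "(\<lambda>i. \<bar>t i - r\<bar> powr v i) \<longlonglongrightarrow> 0"
    proof (rule sandwich0[OF _ Y], intro always_eventually allI conjI)
      fix i
      show "0 \<le> \<bar>t i - r\<bar> powr v i" by simp
      have "\<bar>- of_int m + t i * real n\<bar> = real n * \<bar>t i - r\<bar>"
      proof -
        have e: "- of_int m + t i * real n = real n * (t i - r)"
          by (simp add: algebra_simps nr[symmetric])
        show ?thesis unfolding e abs_mult by simp
      qed
      hence "\<bar>- of_int m + t i * real n\<bar> powr v i = real n powr v i * \<bar>t i - r\<bar> powr v i"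
        by (simp add: powr_mult)
      moreover have "real n powr v i \<ge> 1" using n v0[of i] by (simp add: ge_one_powr_ge_zero)
      ultimately show "\<bar>t i - r\<bar> powr v i \<le> \<bar>- of_int m + t i * real n\<bar> powr v i"
        by (simp add: mult_le_cancel_right1)
    qed
    thus "v \<longlonglongrightarrow> 0 \<and> (\<lambda>i. \<bar>t i - r\<bar> powr v i) \<longlonglongrightarrow> 0" using V by simp
  next
    assume R: "v \<longlonglongrightarrow> 0 \<and> (\<lambda>i. \<bar>t i - r\<bar> powr v i) \<longlonglongrightarrow> 0"
    hence V: "v \<longlonglongrightarrow> 0" and T: "(\<lambda>i. \<bar>t i - r\<bar> powr v i) \<longlonglongrightarrow> 0" by auto
    have "eventually (\<lambda>i. \<bar>t i - r\<bar> powr v i < 1) sequentially"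
      using order_tendstoD(2)[OF T] by simp
    hence ev: "eventually (\<lambda>i. 0 \<le> \<bar>t i - r\<bar> \<and> \<bar>t i - r\<bar> \<le> \<bar>t i - r\<bar> powr v i) sequentially"
    proof (rule eventually_mono)
      fix i assume a: "\<bar>t i - r\<bar> powr v i < 1"
      have "\<bar>t i - r\<bar> \<le> 1"
      proof (rule ccontr)
        assume "\<not> \<bar>t i - r\<bar> \<le> 1"
        hence "1 \<le> \<bar>t i - r\<bar> powr v i" using v0[of i] by (intro ge_one_powr_ge_zero) auto
        thus False using a by simp
      qed
      hence "\<bar>t i - r\<bar> powr 1 \<le> \<bar>t i - r\<bar> powr v i" using v0[of i] by (intro powr_mono') auto
      thus "0 \<le> \<bar>t i - r\<bar> \<and> \<bar>t i - r\<bar> \<le> \<bar>t i - r\<bar> powr v i"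
        by (cases "t i = r") auto
    qed
    have "(\<lambda>i. \<bar>t i - r\<bar>) \<longlonglongrightarrow> 0" by (rule sandwich0[OF ev T])
    hence tr: "t \<longlonglongrightarrow> r" by (simp add: LIM_zero_iff tendsto_rabs_zero_iff)
    show "(\<lambda>i. muR (v i) (t i)) \<longlonglongrightarrow> muQ0 (of_int m / of_nat n)"
      unfolding tendsto_fun_iff
    proof
      fix f :: "int poly"
      let ?F = "map_poly (of_int :: int \<Rightarrow> real) f"
      show "(\<lambda>i. muR (v i) (t i) f) \<longlonglongrightarrow> muQ0 (of_int m / of_nat n) f"
      proof (cases "poly ?F r = 0")
        case False
        have "(\<lambda>i. \<bar>poly ?F (t i)\<bar> powr v i) \<longlonglongrightarrow> \<bar>poly ?F r\<bar> powr 0"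
          by (rule tendsto_powr[OF _ V]) (use False tr in \<open>auto intro!: tendsto_intros\<close>)
        thus ?thesis using False by (simp add: muR_def muQ0_real rr)
      next
        case True
        define g where "g = synthetic_div ?F r"
        have fg: "poly ?F x = (x - r) * poly g x" for x
          using synthetic_div_correct'[of r ?F, THEN arg_cong[where f="\<lambda>p. poly p x"]] True
          by (simp add: g_def algebra_simps)
        define C where "C = \<bar>poly g r\<bar> + 1"
        have C1: "C \<ge> 1" unfolding C_def by simp
        have "(\<lambda>i. \<bar>poly g (t i)\<bar>) \<longlonglongrightarrow> \<bar>poly g r\<bar>" using tr by (intro tendsto_intros)
        hence evC: "eventually (\<lambda>i. \<bar>poly g (t i)\<bar> < C) sequentially"
          by (rule order_tendstoD(2)) (simp add: C_def)
        have Yl: "(\<lambda>i. \<bar>t i - r\<bar> powr v i * C powr v i) \<longlonglongrightarrow> 0 * C powr 0"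
          by (intro tendsto_intros T tendsto_powr V) (use C1 in auto)
        have "(\<lambda>i. \<bar>poly ?F (t i)\<bar> powr v i) \<longlonglongrightarrow> 0"
        proof (rule sandwich0[OF _ Yl[simplified]])
          show "eventually (\<lambda>i. 0 \<le> \<bar>poly ?F (t i)\<bar> powr v i \<and>
                 \<bar>poly ?F (t i)\<bar> powr v i \<le> \<bar>t i - r\<bar> powr v i * C powr v i) sequentially"
            using evC
          proof (rule eventually_mono)
            fix i assume c: "\<bar>poly g (t i)\<bar> < C"
            have "\<bar>poly ?F (t i)\<bar> powr v i = \<bar>t i - r\<bar> powr v i * \<bar>poly g (t i)\<bar> powr v i"
              by (simp add: fg abs_mult powr_mult)
            also have "\<dots> \<le> \<bar>t i - r\<bar> powr v i * C powr v i"
              using c v0[of i] by (intro mult_left_mono powr_mono2) auto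
            finally show "0 \<le> \<bar>poly ?F (t i)\<bar> powr v i \<and>
                 \<bar>poly ?F (t i)\<bar> powr v i \<le> \<bar>t i - r\<bar> powr v i * C powr v i" by simp
          qed
        qed
        thus ?thesis using True by (simp add: muR_def muQ0_real rr)
      qed
    qed
  qed
qed



lemma pabs_eq_of_lt:
  assumes p: "prime p" and lt: "padic_abs p (x - y) < padic_abs p y"
  shows "padic_abs p x = padic_abs p y"
proof -
  have "padic_abs p x \<le> max (padic_abs p y) (padic_abs p (x - y))" by (rule pabs_tri[OF p])
  hence 1: "padic_abs p x \<le> padic_abs p y" using lt by simp
  have "padic_abs p y \<le> max (padic_abs p x) (padic_abs p (y - x))" by (rule pabs_tri[OF p])
  moreover have "padic_abs p (y - x) = padic_abs p (x - y)" by (rule pabs_commute[OF p])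
  ultimately have "padic_abs p y \<le> padic_abs p x" using lt by (auto simp: max_def split: if_splits)
  thus ?thesis using 1 by simp
qed

lemma powr_to0:
  fixes c :: real
  assumes c: "0 < c" "c < 1" and W: "filterlim w at_top sequentially"
  shows "(\<lambda>i. c powr w i) \<longlonglongrightarrow> 0"
proof -
  have "ln c < 0" using c by simp
  hence "filterlim (\<lambda>i. ln c * w i) at_bot sequentially"
    by (intro filterlim_tendsto_neg_mult_at_bot[OF tendsto_const _ W])
  hence "(\<lambda>i. exp (ln c * w i)) \<longlonglongrightarrow> 0" by (rule filterlim_compose[OF exp_at_bot])
  thus ?thesis using c by (simp add: powr_def mult.commute)
qed

lemma muF_Phi: assumes q: "prime q"
  shows "muF q (Phi q a) f = (if int q dvd poly f a then 0 else 1)"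
proof -
  have "[a mod int q = a] (mod int q)" by (simp add: cong_def)
  hence c: "[poly f (a mod int q) = poly f a] (mod int q)" by (rule poly_cong_int)
  have "[poly f (a mod int q) = 0] (mod int q) \<longleftrightarrow> [poly f a = 0] (mod int q)"
    using c by (meson cong_sym cong_trans)
  thus ?thesis by (simp add: muF_def Phi_def cong_0_iff)
qed

lemma pnorm_ge1: "padic_norm p x powr w < 1 \<Longrightarrow> w > 0 \<Longrightarrow> padic_norm p x < 1"
  using ge_one_powr_ge_zero[of "padic_norm p x" w] by (cases "padic_norm p x < 1") auto

lemma partd:
  fixes q :: nat and n :: nat and p :: "nat \<Rightarrow> nat" and w :: "nat \<Rightarrow> real" and s :: "nat \<Rightarrow> nat \<Rightarrow> rat"
  assumes q: "prime q" and n: "n \<ge> 1" and H: "\<forall>i. prime (p i) \<and> w i > 0 \<and> padic_cauchy (p i) (s i)"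
  shows "(\<lambda>i. muQp (p i) (w i) (s i)) \<longlonglongrightarrow> muF q (Phi q (int n)) \<longleftrightarrow>
        (filterlim w at_top sequentially \<and>
         (\<exists>i0. \<forall>i\<ge>i0. p i = q \<and> padic_norm q (\<lambda>j. s i j - of_nat n) \<le> 1 / real q))"
proof
  have q1: "real q > 1" using prime_gt_1_nat[OF q] by simp
  assume L: "(\<lambda>i. muQp (p i) (w i) (s i)) \<longlonglongrightarrow> muF q (Phi q (int n))"
  have "(\<lambda>i. muQp (p i) (w i) (s i) [:int q:]) \<longlonglongrightarrow> muF q (Phi q (int n)) [:int q:]"
    using L unfolding tendsto_fun_iff by blast
  hence Lq: "(\<lambda>i. padic_abs (p i) (of_nat q) powr w i) \<longlonglongrightarrow> 0"
    by (simp add: muQp_const muF_Phi[OF q])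
  have evp: "eventually (\<lambda>i. p i = q) sequentially"
    using order_tendstoD(2)[OF Lq, of 1]
  proof (simp, elim eventually_mono)
    fix i assume a: "padic_abs (p i) (of_nat q) powr w i < 1"
    show "p i = q"
    proof (rule ccontr)
      assume "p i \<noteq> q"
      hence "padic_abs (p i) (of_int (int q)) = 1"
        using pabs_int_eq1[of "p i" "int q"] H prime_dvd_prime_eq[of "p i" q] q by blast
      thus False using a by simp
    qed
  qed
  have W: "filterlim w at_top sequentially"
    unfolding filterlim_at_top
  proof
    fix Z :: real
    have "(1 / real q) powr Z > 0" using q1 by simp
    from order_tendstoD(2)[OF Lq this] evp
    show "eventually (\<lambda>i. Z \<le> w i) sequentially"
    proof eventually_elim
      case (elim i)
      hence "1 / real q powr w i < 1 / real q powr Z" using pabs_p[OF q] by (simp add: powr_divide)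
      moreover have "real q powr w i > 0" "real q powr Z > 0" using q1 by simp_all
      ultimately have "real q powr Z < real q powr w i" using inverse_less_iff_less[of "real q powr w i" "real q powr Z"] by (simp add: inverse_eq_divide)
      thus ?case using q1 by simp
    qed
  qed
  let ?f = "[:- int n, 1:]"
  have "(\<lambda>i. muQp (p i) (w i) (s i) ?f) \<longlonglongrightarrow> muF q (Phi q (int n)) ?f"
    using L unfolding tendsto_fun_iff by blast
  moreover have "muF q (Phi q (int n)) ?f = 0" by (simp add: muF_Phi[OF q])
  ultimately have "(\<lambda>i. padic_norm (p i) (\<lambda>j. s i j - of_nat n) powr w i) \<longlonglongrightarrow> 0"
    by (simp add: muQp_def)
  from order_tendstoD(2)[OF this zero_less_one] evp
  have "eventually (\<lambda>i. p i = q \<and> padic_norm q (\<lambda>j. s i j - of_nat n) \<le> 1 / real q) sequentially"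
  proof eventually_elim
    case (elim i)
    hence "padic_norm q (\<lambda>j. s i j - of_nat n) < 1" using H pnorm_ge1 by auto
    thus ?case using elim pnorm_lt1[OF q cauchy_shift] H by metis
  qed
  thus "filterlim w at_top sequentially \<and>
         (\<exists>i0. \<forall>i\<ge>i0. p i = q \<and> padic_norm q (\<lambda>j. s i j - of_nat n) \<le> 1 / real q)"
    using W by (simp add: eventually_sequentially)
next
  have q1: "real q > 1" using prime_gt_1_nat[OF q] by simp
  assume R: "filterlim w at_top sequentially \<and>
         (\<exists>i0. \<forall>i\<ge>i0. p i = q \<and> padic_norm q (\<lambda>j. s i j - of_nat n) \<le> 1 / real q)"
  hence W: "filterlim w at_top sequentially"
    and ev: "eventually (\<lambda>i. p i = q \<and> padic_norm q (\<lambda>j. s i j - of_nat n) \<le> 1 / real q) sequentially"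
    by (auto simp: eventually_sequentially)
  show "(\<lambda>i. muQp (p i) (w i) (s i)) \<longlonglongrightarrow> muF q (Phi q (int n))"
    unfolding tendsto_fun_iff
  proof
    fix f :: "int poly"
    define N where "N = poly f (int n)"
    have fn: "poly (map_poly of_int f) (of_nat n :: rat) = of_int N"
      unfolding N_def using poly_of_int_hom[of f "int n"] by simp
    have n1: "padic_abs q (of_nat n) \<le> 1" using pabs_int_le1[OF q, of "int n"] by simp
    have key: "eventually (\<lambda>j. padic_abs q (poly (map_poly of_int f) (s i j) - of_int N) \<le> 1 / real q) sequentially"
      if i: "p i = q" "padic_norm q (\<lambda>j. s i j - of_nat n) \<le> 1 / real q" for i
    proof -
      have c: "padic_cauchy q (\<lambda>j. s i j - of_nat n)" using H i cauchy_shift by metis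
      have "padic_norm q (\<lambda>j. s i j - of_nat n) < 1" using i q1 by (simp add: divide_less_eq order_le_less_trans)
      from pnorm_lt[OF q c this]
      show ?thesis
      proof (rule eventually_mono)
        fix j assume a: "padic_abs q (s i j - of_nat n) < 1"
        have b: "padic_abs q (s i j - of_nat n) \<le> 1 / real q" using pabs_lt1[OF q a] .
        have "padic_abs q (s i j) \<le> max (padic_abs q (of_nat n)) (padic_abs q (s i j - of_nat n))"
          by (rule pabs_tri[OF q])
        hence sj: "padic_abs q (s i j) \<le> 1" using n1 a by simp
        have "padic_abs q (poly (map_poly of_int f) (s i j) - poly (map_poly of_int f) (of_nat n)) \<le> padic_abs q (s i j - of_nat n)"
          by (rule padic_poly_lip[OF q sj n1])
        thus "padic_abs q (poly (map_poly of_int f) (s i j) - of_int N) \<le> 1 / real q" using b fn by simp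
      qed
    qed
    show "(\<lambda>i. muQp (p i) (w i) (s i) f) \<longlonglongrightarrow> muF q (Phi q (int n)) f"
    proof (cases "int q dvd N")
      case True
      have Nq: "padic_abs q (of_int N) \<le> 1 / real q"
      proof (cases "N = 0")
        case False
        have "padic_abs q (of_int N) < 1"
          using pabs_int_le1[OF q, of N] pabs_int_eq1[OF q, of N] True by (simp add: order_le_less)
        thus ?thesis by (rule pabs_lt1[OF q])
      qed (use q1 in simp)
      have "(\<lambda>i. muQp (p i) (w i) (s i) f) \<longlonglongrightarrow> 0"
      proof (rule sandwich0[OF _ powr_to0[OF _ _ W, of "1 / real q"]])
        show "eventually (\<lambda>i. 0 \<le> muQp (p i) (w i) (s i) f \<and> muQp (p i) (w i) (s i) f \<le> (1 / real q) powr w i) sequentially"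
          using ev
        proof (rule eventually_mono)
          fix i assume i: "p i = q \<and> padic_norm q (\<lambda>j. s i j - of_nat n) \<le> 1 / real q"
          have "eventually (\<lambda>j. padic_abs q (poly (map_poly of_int f) (s i j)) \<le> 1 / real q) sequentially"
            using key[OF conjunct1[OF i] conjunct2[OF i]]
          proof (rule eventually_mono)
            fix j assume a: "padic_abs q (poly (map_poly of_int f) (s i j) - of_int N) \<le> 1 / real q"
            have "padic_abs q (poly (map_poly of_int f) (s i j)) \<le> max (padic_abs q (of_int N)) (padic_abs q (poly (map_poly of_int f) (s i j) - of_int N))"
              by (rule pabs_tri[OF q])
            thus "padic_abs q (poly (map_poly of_int f) (s i j)) \<le> 1 / real q" using a Nq by simp
          qed
          hence "padic_norm q (\<lambda>j. poly (map_poly of_int f) (s i j)) \<le> 1 / real q"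
            using pnorm_le[OF q cauchy_poly[OF q]] H i by metis
          hence "padic_norm q (\<lambda>j. poly (map_poly of_int f) (s i j)) powr w i \<le> (1 / real q) powr w i"
            using H pnorm_nonneg[OF q cauchy_poly[OF q]] i by (metis less_imp_le powr_mono2)
          thus "0 \<le> muQp (p i) (w i) (s i) f \<and> muQp (p i) (w i) (s i) f \<le> (1 / real q) powr w i"
            using i by (simp add: muQp_def)
        qed
      qed (use q1 in auto)
      thus ?thesis using True by (simp add: muF_Phi[OF q] N_def)
    next
      case False
      have N1: "padic_abs q (of_int N) = 1" using pabs_int_eq1[OF q] False by simp
      have "eventually (\<lambda>i. muQp (p i) (w i) (s i) f = 1) sequentially"
        using ev
      proof (rule eventually_mono)
        fix i assume i: "p i = q \<and> padic_norm q (\<lambda>j. s i j - of_nat n) \<le> 1 / real q"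
        have "eventually (\<lambda>j. padic_abs q (poly (map_poly of_int f) (s i j)) = 1) sequentially"
          using key[OF conjunct1[OF i] conjunct2[OF i]]
        proof (rule eventually_mono)
          fix j assume a: "padic_abs q (poly (map_poly of_int f) (s i j) - of_int N) \<le> 1 / real q"
          hence "padic_abs q (poly (map_poly of_int f) (s i j) - of_int N) < padic_abs q (of_int N)"
            using N1 q1 by (simp add: order_le_less_trans)
          thus "padic_abs q (poly (map_poly of_int f) (s i j)) = 1" using pabs_eq_of_lt[OF q] N1 by metis
        qed
        hence "padic_norm q (\<lambda>j. poly (map_poly of_int f) (s i j)) = 1" by (rule pnorm_eq)
        thus "muQp (p i) (w i) (s i) f = 1" using i by (simp add: muQp_def)
      qed
      hence "(\<lambda>i. muQp (p i) (w i) (s i) f) \<longlonglongrightarrow> 1" by (rule tendsto_eventually)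
      thus ?thesis using False by (simp add: muF_Phi[OF q] N_def)
    qed
  qed
qed



lemma pnorm_scale:
  assumes p: "prime p" and c: "padic_cauchy p x"
  shows "padic_norm p (\<lambda>j. a * x j) = padic_abs p a * padic_norm p x"
proof -
  have "(\<lambda>j. padic_abs p a * padic_abs p (x j)) \<longlonglongrightarrow> padic_abs p a * padic_norm p x"
    by (rule tendsto_mult_left[OF pnorm_lim[OF p c]])
  hence "(\<lambda>j. padic_abs p (a * x j)) \<longlonglongrightarrow> padic_abs p a * padic_norm p x"
    by (simp add: pabs_mult[OF p])
  thus ?thesis unfolding padic_norm_def by (rule limI)
qed

lemma pabs_pos: "prime p \<Longrightarrow> x \<noteq> 0 \<Longrightarrow> padic_abs p x > 0"
  using pabs_nonneg[of p x] pabs_eq0[of p x] by linarith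

lemma partg:
  fixes m :: int and n :: nat and p :: "nat \<Rightarrow> nat" and w :: "nat \<Rightarrow> real" and s :: "nat \<Rightarrow> nat \<Rightarrow> rat"
  assumes n: "n \<ge> 1" and H: "\<forall>i. prime (p i) \<and> w i > 0 \<and> padic_cauchy (p i) (s i)"
  shows "(\<lambda>i. muQp (p i) (w i) (s i)) \<longlonglongrightarrow> muQ0 (of_int m / of_nat n) \<longleftrightarrow>
        ((\<forall>k::nat. k \<ge> 1 \<longrightarrow> (\<lambda>i. padic_abs (p i) (of_nat k) powr w i) \<longlonglongrightarrow> 1) \<and>
         (\<lambda>i. padic_norm (p i) (\<lambda>j. s i j - of_int m / of_nat n) powr w i) \<longlonglongrightarrow> 0)"
proof -
  define r :: rat where "r = of_int m / of_nat n"
  have nr: "of_nat n * r = of_int m" using n unfolding r_def by simp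
  have pr: "prime (p i)" "w i > 0" "padic_cauchy (p i) (s i)" for i using H by auto
  have npos: "padic_abs (p i) (of_nat n) > 0" for i using pabs_pos[OF pr(1)] n by simp
  show ?thesis unfolding r_def[symmetric]
  proof
    assume L: "(\<lambda>i. muQp (p i) (w i) (s i)) \<longlonglongrightarrow> muQ0 r"
    have A: "(\<lambda>i. padic_abs (p i) (of_nat k) powr w i) \<longlonglongrightarrow> 1" if k: "k \<ge> 1" for k :: nat
    proof -
      have "(\<lambda>i. muQp (p i) (w i) (s i) [:int k:]) \<longlonglongrightarrow> muQ0 r [:int k:]"
        using L unfolding tendsto_fun_iff by blast
      thus ?thesis using k by (simp add: muQp_const muQ0_const)
    qed
    let ?f = "[:-m, int n:]"
    have "(\<lambda>i. muQp (p i) (w i) (s i) ?f) \<longlonglongrightarrow> muQ0 r ?f"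
      using L unfolding tendsto_fun_iff by blast
    moreover have "muQ0 r ?f = 0" using nr by (simp add: muQ0_def mult.commute)
    moreover have "muQp (p i) (w i) (s i) ?f =
        padic_abs (p i) (of_nat n) powr w i * padic_norm (p i) (\<lambda>j. s i j - r) powr w i" for i
    proof -
      have "(\<lambda>k. poly (map_poly of_int ?f) (s i k)) = (\<lambda>j. of_nat n * (s i j - r))"
        using nr by (auto simp: algebra_simps)
      thus ?thesis unfolding muQp_def
        by (simp add: pnorm_scale[OF pr(1) cauchy_shift[OF pr(3)]] powr_mult)
    qed
    ultimately have F: "(\<lambda>i. padic_abs (p i) (of_nat n) powr w i * padic_norm (p i) (\<lambda>j. s i j - r) powr w i) \<longlonglongrightarrow> 0"
      by simp
    have "(\<lambda>i. (padic_abs (p i) (of_nat n) powr w i * padic_norm (p i) (\<lambda>j. s i j - r) powr w i)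
              / padic_abs (p i) (of_nat n) powr w i) \<longlonglongrightarrow> 0 / 1"
      by (rule tendsto_divide[OF F A[OF n]]) simp
    moreover have "(padic_abs (p i) (of_nat n) powr w i * padic_norm (p i) (\<lambda>j. s i j - r) powr w i)
              / padic_abs (p i) (of_nat n) powr w i = padic_norm (p i) (\<lambda>j. s i j - r) powr w i" for i
      using npos[of i] by simp
    ultimately show "(\<forall>k::nat. k \<ge> 1 \<longrightarrow> (\<lambda>i. padic_abs (p i) (of_nat k) powr w i) \<longlonglongrightarrow> 1) \<and>
         (\<lambda>i. padic_norm (p i) (\<lambda>j. s i j - r) powr w i) \<longlonglongrightarrow> 0" using A by simp
  next
    assume R: "(\<forall>k::nat. k \<ge> 1 \<longrightarrow> (\<lambda>i. padic_abs (p i) (of_nat k) powr w i) \<longlonglongrightarrow> 1) \<and>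
         (\<lambda>i. padic_norm (p i) (\<lambda>j. s i j - r) powr w i) \<longlonglongrightarrow> 0"
    hence A: "\<And>k::nat. k \<ge> 1 \<Longrightarrow> (\<lambda>i. padic_abs (p i) (of_nat k) powr w i) \<longlonglongrightarrow> 1"
      and E: "(\<lambda>i. padic_norm (p i) (\<lambda>j. s i j - r) powr w i) \<longlonglongrightarrow> 0" by auto
    show "(\<lambda>i. muQp (p i) (w i) (s i)) \<longlonglongrightarrow> muQ0 r" unfolding tendsto_fun_iff
    proof
      fix f :: "int poly"
      define D where "D = degree f"
      have n0: "int n \<noteq> 0" using n by simp
      obtain G where G1: "\<And>x::rat. of_int (int n) ^ degree f * poly (map_poly of_int f) x = poly (map_poly of_int G) (of_int (int n) * x)"
        and G2: "\<And>x::int. int n ^ degree f * poly f x = poly G (int n * x)"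
        and G3: "poly (map_poly of_int f) (of_int m / of_int (int n) :: rat) = 0 \<longleftrightarrow> poly G m = 0"
        by (rule scale_G[OF n0, of f m]) blast
      define N where "N = poly G m"
      let ?F = "poly (map_poly (of_int :: int \<Rightarrow> rat) f)"
      have fr: "of_nat n ^ D * ?F r = of_int N"
        using G1[of r] nr poly_of_int_hom[of G m] unfolding N_def D_def by simp
      have fr0: "?F r = 0 \<longleftrightarrow> N = 0" using G3 unfolding N_def r_def by simp
      define c where "c i = padic_abs (p i) (of_nat (n ^ D)) powr w i" for i
      have cA: "c \<longlonglongrightarrow> 1" unfolding c_def by (rule A) (use n in simp)
      have cpos: "c i > 0" for i
      proof -
        have "(of_nat (n ^ D) :: rat) \<noteq> 0" using n by simp
        hence "padic_abs (p i) (of_nat (n ^ D)) > 0" by (rule pabs_pos[OF pr(1)])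
        thus ?thesis unfolding c_def by simp
      qed
      have nD: "padic_abs (p i) (of_nat n) ^ D = padic_abs (p i) (of_nat (n ^ D))" for i
        by (simp add: pabs_power[OF pr(1)])
      have est: "padic_abs (p i) (of_nat (n ^ D)) * padic_abs (p i) (?F x - ?F r) \<le> padic_abs (p i) (x - r)"
        if x: "padic_abs (p i) (x - r) \<le> 1" for i x
      proof -
        have pi: "prime (p i)" by (rule pr(1))
        have m1: "padic_abs (p i) (of_int m) \<le> 1" by (rule pabs_int_le1[OF pi])
        have n1: "padic_abs (p i) (of_nat n) \<le> 1" using pabs_int_le1[OF pi, of "int n"] by simp
        have "padic_abs (p i) (of_nat n * (x - r)) \<le> 1"
          using x n1 pabs_nonneg[of "p i"] by (simp add: pabs_mult[OF pi] mult_le_one)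
        moreover have "of_nat n * x = of_nat n * (x - r) + of_int m" using nr by (simp add: algebra_simps)
        ultimately have bx: "padic_abs (p i) (of_int (int n) * x) \<le> 1"
          using pabs_ultra[OF pi, of "of_nat n * (x - r)" "of_int m"] m1 by simp
        have br: "padic_abs (p i) (of_int (int n) * r) \<le> 1" using nr m1 by simp
        have "padic_abs (p i) (of_int (int n)) ^ degree f * padic_abs (p i) (?F x - ?F r)
              \<le> padic_abs (p i) (of_int (int n) * x - of_int (int n) * r)"
          by (rule padic_poly_scaled(1)[OF pi bx br])
        also have "\<dots> = padic_abs (p i) (of_nat n) * padic_abs (p i) (x - r)"
          by (simp add: pabs_mult[OF pi, symmetric] right_diff_distrib)
        also have "\<dots> \<le> padic_abs (p i) (x - r)"
          using n1 pabs_nonneg[of "p i"] by (simp add: mult_left_le_one_le)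
        finally show ?thesis using nD[of i] by (simp add: D_def)
      qed
      show "(\<lambda>i. muQp (p i) (w i) (s i) f) \<longlonglongrightarrow> muQ0 r f"
      proof (cases "N = 0")
        case True
        hence Fr: "?F r = 0" using fr0 by simp
        have Y: "(\<lambda>i. padic_norm (p i) (\<lambda>j. s i j - r) powr w i / c i) \<longlonglongrightarrow> 0 / 1"
          by (rule tendsto_divide[OF E cA]) simp
        have "(\<lambda>i. muQp (p i) (w i) (s i) f) \<longlonglongrightarrow> 0"
        proof (rule sandwich0[OF _ Y[simplified]])
          show "eventually (\<lambda>i. 0 \<le> muQp (p i) (w i) (s i) f \<and>
              muQp (p i) (w i) (s i) f \<le> padic_norm (p i) (\<lambda>j. s i j - r) powr w i / c i) sequentially"
            using order_tendstoD(2)[OF E zero_less_one]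
          proof (rule eventually_mono)
            fix i assume e1: "padic_norm (p i) (\<lambda>j. s i j - r) powr w i < 1"
            have pi: "prime (p i)" by (rule pr(1))
            have cs: "padic_cauchy (p i) (\<lambda>j. s i j - r)" by (rule cauchy_shift[OF pr(3)])
            have cf: "padic_cauchy (p i) (\<lambda>j. ?F (s i j))" by (rule cauchy_poly[OF pi pr(3)])
            have "padic_norm (p i) (\<lambda>j. s i j - r) < 1" using pnorm_ge1 e1 pr(2) by blast
            from pnorm_lt[OF pi cs this]
            have ev: "eventually (\<lambda>j. padic_abs (p i) (of_nat (n ^ D)) * padic_abs (p i) (?F (s i j)) \<le> padic_abs (p i) (s i j - r)) sequentially"
              by (rule eventually_mono) (use est[of i] Fr in auto)
            have "padic_abs (p i) (of_nat (n ^ D)) * padic_norm (p i) (\<lambda>j. ?F (s i j)) \<le> padic_norm (p i) (\<lambda>j. s i j - r)"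
              by (rule tendsto_le[OF _ pnorm_lim[OF pi cs] tendsto_mult_left[OF pnorm_lim[OF pi cf]] ev]) simp
            hence "(padic_abs (p i) (of_nat (n ^ D)) * padic_norm (p i) (\<lambda>j. ?F (s i j))) powr w i
                    \<le> padic_norm (p i) (\<lambda>j. s i j - r) powr w i"
              using pabs_nonneg pnorm_nonneg[OF pi cf] pr(2)[of i] by (intro powr_mono2) auto
            hence "c i * muQp (p i) (w i) (s i) f \<le> padic_norm (p i) (\<lambda>j. s i j - r) powr w i"
              by (simp add: c_def muQp_def powr_mult)
            thus "0 \<le> muQp (p i) (w i) (s i) f \<and>
              muQp (p i) (w i) (s i) f \<le> padic_norm (p i) (\<lambda>j. s i j - r) powr w i / c i"
              using cpos[of i] by (simp add: muQp_def pos_le_divide_eq mult.commute)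
          qed
        qed
        moreover have "muQ0 r f = 0" using Fr by (simp add: muQ0_def)
        ultimately show ?thesis by simp
      next
        case False
        hence Fr: "?F r \<noteq> 0" using fr0 by simp
        define K where "K = nat \<bar>N\<bar>"
        have K1: "K \<ge> 1" using False unfolding K_def by simp
        have Kabs: "padic_abs (p i) (of_nat K) = padic_abs (p i) (of_int N)" for i
        proof -
          have "(of_nat K :: rat) = of_int N \<or> (of_nat K :: rat) = - of_int N" unfolding K_def by (cases "N \<ge> 0") auto
          thus ?thesis using pabs_minus[OF pr(1)] by auto
        qed
        define a where "a i = padic_abs (p i) (of_nat K) powr w i" for i
        have aA: "a \<longlonglongrightarrow> 1" unfolding a_def by (rule A[OF K1])
        have evgood: "eventually (\<lambda>i. muQp (p i) (w i) (s i) f = a i / c i) sequentially"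
        proof -
          have h1: "(0::real) < 1/2" "(1/2::real) < 1" by simp_all
          show ?thesis
          using order_tendstoD(2)[OF E h1(1)] order_tendstoD(1)[OF aA h1(2)]
        proof eventually_elim
          case (elim i)
          hence e1: "padic_norm (p i) (\<lambda>j. s i j - r) powr w i < 1/2" and a1: "1/2 < a i" by auto
          have pi: "prime (p i)" by (rule pr(1))
          have cs: "padic_cauchy (p i) (\<lambda>j. s i j - r)" by (rule cauchy_shift[OF pr(3)])
          have Nle: "padic_abs (p i) (of_int N) \<le> 1" by (rule pabs_int_le1[OF pi])
          have lt: "padic_norm (p i) (\<lambda>j. s i j - r) < padic_abs (p i) (of_int N)"
          proof (rule ccontr)
            assume "\<not> ?thesis"
            hence "a i \<le> padic_norm (p i) (\<lambda>j. s i j - r) powr w i"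
              unfolding a_def Kabs using pabs_nonneg pr(2)[of i] by (intro powr_mono2) auto
            thus False using e1 a1 by simp
          qed
          have "eventually (\<lambda>j. padic_abs (p i) (?F (s i j)) = padic_abs (p i) (?F r)) sequentially"
            using pnorm_lt[OF pi cs lt]
          proof (rule eventually_mono)
            fix j assume sj: "padic_abs (p i) (s i j - r) < padic_abs (p i) (of_int N)"
            have "padic_abs (p i) (of_nat (n ^ D)) * padic_abs (p i) (?F (s i j) - ?F r) \<le> padic_abs (p i) (s i j - r)"
              by (rule est) (use sj Nle in simp)
            also have "\<dots> < padic_abs (p i) (of_int N)" by (rule sj)
            also have "\<dots> = padic_abs (p i) (of_nat n ^ D * ?F r)" by (simp only: fr)
            also have "\<dots> = padic_abs (p i) (of_nat (n ^ D)) * padic_abs (p i) (?F r)"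
              by (simp add: pabs_mult[OF pi])
            finally have "padic_abs (p i) (?F (s i j) - ?F r) < padic_abs (p i) (?F r)"
              using pabs_pos[OF pi, of "of_nat (n ^ D)"] n by (simp add: mult_less_cancel_left_pos)
            thus "padic_abs (p i) (?F (s i j)) = padic_abs (p i) (?F r)" by (rule pabs_eq_of_lt[OF pi])
          qed
          hence "padic_norm (p i) (\<lambda>j. ?F (s i j)) = padic_abs (p i) (?F r)" by (rule pnorm_eq)
          moreover have "padic_abs (p i) (?F r) = padic_abs (p i) (of_nat K) / padic_abs (p i) (of_nat (n ^ D))"
          proof -
            have "padic_abs (p i) (of_nat K) = padic_abs (p i) (of_nat n ^ D * ?F r)" by (simp only: Kabs fr)
            also have "\<dots> = padic_abs (p i) (of_nat (n ^ D)) * padic_abs (p i) (?F r)"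
              by (simp add: pabs_mult[OF pi])
            finally show ?thesis using pabs_pos[OF pi, of "of_nat (n ^ D)"] n by (simp add: field_simps)
          qed
          ultimately show "muQp (p i) (w i) (s i) f = a i / c i"
            by (simp add: muQp_def a_def c_def powr_divide)
        qed
        qed
        have "(\<lambda>i. a i / c i) \<longlonglongrightarrow> 1 / 1" by (rule tendsto_divide[OF aA cA]) simp
        hence "(\<lambda>i. muQp (p i) (w i) (s i) f) \<longlonglongrightarrow> 1"
          using tendsto_cong[OF evgood] by simp
        moreover have "muQ0 r f = 1" using Fr by (simp add: muQ0_def)
        ultimately show ?thesis by simp
      qed
    qed
  qed
qed


theorem theorem3p8:
  fixes q :: nat and m :: int and n :: nat
  assumes "prime q" and "n \<ge> 1" and "gcd m (int n) = 1"
  shows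
   "openin (top_of_set Amin) UR \<and>
    openin (top_of_set Amin) (Uq q) \<and>
    openin (top_of_set Amin) (UF q \<union> Uq q) \<and>
    discrete_subspace UQ0 \<and>
    discrete_subspace (\<Union>p\<in>{p. prime p}. UF p) \<and>
    (\<forall>(p :: nat \<Rightarrow> nat) (w :: nat \<Rightarrow> real) (s :: nat \<Rightarrow> nat \<Rightarrow> rat).
       (\<forall>i. prime (p i) \<and> w i > 0 \<and> padic_cauchy (p i) (s i)) \<longrightarrow>
       ((\<lambda>i. muQp (p i) (w i) (s i)) \<longlonglongrightarrow> muF q (Phi q (int n)) \<longleftrightarrow>
        (filterlim w at_top sequentially \<and>
         (\<exists>i0. \<forall>i\<ge>i0. p i = q \<and> padic_norm q (\<lambda>j. s i j - of_nat n) \<le> 1 / real q)))) \<and>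
    (\<forall>(p :: nat \<Rightarrow> nat) (k :: nat \<Rightarrow> int).
       (\<forall>i. prime (p i)) \<longrightarrow>
       ((\<lambda>i. muF (p i) (Phi (p i) (k i))) \<longlonglongrightarrow> muQ0 (of_int m / of_nat n) \<longleftrightarrow>
        (filterlim p at_top sequentially \<and>
         (\<exists>i0. \<forall>i\<ge>i0. Phi (p i) (k i) = frac_mod (p i) m (int n))))) \<and>
    (\<forall>(v :: nat \<Rightarrow> real) (t :: nat \<Rightarrow> real).
       (\<forall>i. v i \<in> {0<..1}) \<longrightarrow>
       ((\<lambda>i. muR (v i) (t i)) \<longlonglongrightarrow> muQ0 (of_int m / of_nat n) \<longleftrightarrow>
        (v \<longlonglongrightarrow> 0 \<and>
         (\<lambda>i. \<bar>t i - of_int m / of_nat n\<bar> powr v i) \<longlonglongrightarrow> 0))) \<and>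
    (\<forall>(p :: nat \<Rightarrow> nat) (w :: nat \<Rightarrow> real) (s :: nat \<Rightarrow> nat \<Rightarrow> rat).
       (\<forall>i. prime (p i) \<and> w i > 0 \<and> padic_cauchy (p i) (s i)) \<longrightarrow>
       ((\<lambda>i. muQp (p i) (w i) (s i)) \<longlonglongrightarrow> muQ0 (of_int m / of_nat n) \<longleftrightarrow>
        ((\<forall>k::nat. k \<ge> 1 \<longrightarrow> (\<lambda>i. padic_abs (p i) (of_nat k) powr w i) \<longlonglongrightarrow> 1) \<and>
         (\<lambda>i. padic_norm (p i) (\<lambda>j. s i j - of_int m / of_nat n) powr w i) \<longlonglongrightarrow> 0)))"
  apply (intro conjI allI impI)
          apply (rule partb_UR)
         apply (rule partb_Uq[OF assms(1)])
        apply (rule partb_UFq[OF assms(1)])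
       apply (rule partc_Q0)
      apply (rule partc_F)
     apply (rule partd[OF assms(1) assms(2)], assumption)
    apply (rule parte[OF assms(2)], assumption)
   apply (rule partf[OF assms(2)], assumption)
  apply (rule partg[OF assms(2)], assumption)
  done

end
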